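(* For any partition $\lambda$ of $n$, $$F_{\lambda^\vee}\,\omega_{\pi_\lambda^{-1}}\,E_\lambda=F_{\lambda^\vee}\,\overline{\omega}_{\pi_\lambda^{-1}}\,E_\lambda=F_{\lambda^\vee}\,\omega_{\pi_\lambda}^{-1}\,E_\lambda,$$ where $\overline{\omega}_{\pi_\lambda^{-1}}$ is the braid obtained from $\omega_{\pi_\lambda^{-1}}$ by switching all of its crossings.
   Context: $H_n$ is the Hecke algebra over a ring $R\ni q^{\pm1}$ generated by $\sigma_1,\dots,\sigma_{n-1}$ with braid relations and $(\sigma_i-q)(\sigma_i+q^{-1})=0$, realized as the HOMFLY-PT skein of $n$-tangles (skein relation: positive crossing minus negative crossing equals $(q-q^{-1})$ times smoothing; product $xy$ = $x$ placed above $y$). $\omega_\pi$ is the positive permutation braid of $\pi\in S_n$ (all crossings positive, each pair of strings crosses at most once, string from top point $i$ ends at bottom point $\pi(i)$), $\ell(\pi)$ its length. $a_k=\sum_{\pi\in S_k}q^{\ell(\pi)}\omega_\pi$, $b_k=\sum_{\pi\in S_k}(-q)^{-\ell(\pi)}\omega_\pi$; for a partition $\lambda=(\lambda_1,\dots,\lambda_l)$ of $n$, $E_\lambda=a_{\lambda_1}\otimes\cdots\otimes a_{\lambda_l}$, $F_\lambda=b_{\lambda_1}\otimes\cdots\otimes b_{\lambda_l}$ (side-by-side juxtaposition on consecutive blocks of strands). $\lambda^\vee$ is the conjugate partition. $T(\lambda)$ numbers the cells of the Young diagram of $\lambda$ by $1,\dots,n$ along rows; $\pi_\lambda\in S_n$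 is defined by $\pi_\lambda(i)=j$ when transposing the diagram carries cell $i$ of $T(\lambda)$ to cell $j$ of $T(\lambda^\vee)$. *)

theory Defs
  imports "HOL-Combinatorics.Permutations"
begin

text \<open>Hecke algebra H_n presented by generators sigma_1..sigma_(n-1) in an arbitrary ring
  (universal formulation). Strand positions are 1..n; permutations of {1..n}.\<close>

definition sswap :: "nat \<Rightarrow> nat \<Rightarrow> nat" where
  "sswap i j = (if j = i then i + 1 else if j = i + 1 then i else j)"

text \<open>Permutation realised by the braid word [i1,...,ik] = sigma_i1 * ... * sigma_ik
  (sigma_i1 on top): string from top point j ends at bottom point (s_ik o ... o s_i1) j.\<close>
definition perm_of_word :: "nat list \<Rightarrow> nat \<Rightarrow> nat" where
  "perm_of_word w = fold (\<lambda>i f. sswap i \<circ> f) w id"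

definition inv_len :: "nat \<Rightarrow> (nat \<Rightarrow> nat) \<Rightarrow> nat" where
  "inv_len n p = card {(i, j). 1 \<le> i \<and> i < j \<and> j \<le> n \<and> p j < p i}"

definition reduced_word :: "nat \<Rightarrow> (nat \<Rightarrow> nat) \<Rightarrow> nat list \<Rightarrow> bool" where
  "reduced_word n p w \<longleftrightarrow> (\<forall>i\<in>set w. 1 \<le> i \<and> i < n) \<and> length w = inv_len n p
     \<and> perm_of_word w = p"

definition rword :: "nat \<Rightarrow> (nat \<Rightarrow> nat) \<Rightarrow> nat list" where
  "rword n p = (SOME w. reduced_word n p w)"

text \<open>Positive permutation braid omega_p (g = sigma), or the braid with all crossings
  switched (g = sigma inverse).\<close>
definition pbraid :: "(nat \<Rightarrow> 'a::ring_1) \<Rightarrow> nat \<Rightarrow> (nat \<Rightarrow> nat) \<Rightarrow> 'a" where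
  "pbraid g n p = prod_list (map g (rword n p))"

definition shift_perm :: "nat \<Rightarrow> nat \<Rightarrow> (nat \<Rightarrow> nat) \<Rightarrow> nat \<Rightarrow> nat" where
  "shift_perm m k p i = (if m < i \<and> i \<le> m + k then p (i - m) + m else i)"

definition a_block :: "(nat \<Rightarrow> 'a::ring_1) \<Rightarrow> 'a \<Rightarrow> nat \<Rightarrow> nat \<Rightarrow> nat \<Rightarrow> 'a" where
  "a_block \<sigma> q n m k = (\<Sum>p\<in>{p. p permutes {1..k}}. q ^ inv_len k p * pbraid \<sigma> n (shift_perm m k p))"

definition b_block :: "(nat \<Rightarrow> 'a::ring_1) \<Rightarrow> 'a \<Rightarrow> nat \<Rightarrow> nat \<Rightarrow> nat \<Rightarrow> 'a" where
  "b_block \<sigma> qi n m k = (\<Sum>p\<in>{p. p permutes {1..k}}. (- qi) ^ inv_len k p * pbraid \<sigma> n (shift_perm m k p))"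

fun blocks :: "(nat \<Rightarrow> nat \<Rightarrow> 'a::ring_1) \<Rightarrow> nat \<Rightarrow> nat list \<Rightarrow> 'a" where
  "blocks f m [] = 1"
| "blocks f m (k # ks) = f m k * blocks f (m + k) ks"

definition E_part :: "(nat \<Rightarrow> 'a::ring_1) \<Rightarrow> 'a \<Rightarrow> nat \<Rightarrow> nat list \<Rightarrow> 'a" where
  "E_part \<sigma> q n lam = blocks (a_block \<sigma> q n) 0 lam"

definition F_part :: "(nat \<Rightarrow> 'a::ring_1) \<Rightarrow> 'a \<Rightarrow> nat \<Rightarrow> nat list \<Rightarrow> 'a" where
  "F_part \<sigma> qi n lam = blocks (b_block \<sigma> qi n) 0 lam"

definition is_partition :: "nat \<Rightarrow> nat list \<Rightarrow> bool" where
  "is_partition n lam \<longleftrightarrow> sum_list lam = n \<and> sorted_wrt (\<ge>) lam \<and> 0 \<notin> set lam"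

definition conj_part :: "nat list \<Rightarrow> nat list" where
  "conj_part lam = map (\<lambda>j. length (filter (\<lambda>x. j \<le> x) lam)) [1..<Suc (fold max lam 0)]"

text \<open>Cell (r,c) (row r, column c, 1-based) of the Young diagram; its number in T(lam).\<close>
definition is_cell :: "nat list \<Rightarrow> nat \<Rightarrow> nat \<Rightarrow> bool" where
  "is_cell lam r c \<longleftrightarrow> 1 \<le> r \<and> r \<le> length lam \<and> 1 \<le> c \<and> c \<le> lam ! (r - 1)"

definition cell_num :: "nat list \<Rightarrow> nat \<Rightarrow> nat \<Rightarrow> nat" where
  "cell_num lam r c = sum_list (take (r - 1) lam) + c"

definition pi_part :: "nat list \<Rightarrow> nat \<Rightarrow> nat" where
  "pi_part lam i = (if \<exists>r c. is_cell lam r c \<and> i = cell_num lam r c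
     then (THE j. \<exists>r c. is_cell lam r c \<and> i = cell_num lam r c \<and> j = cell_num (conj_part lam) c r)
     else i)"

end

theory Submission
  imports Defs
begin


lemma sswap_inv[simp]: "sswap i (sswap i j) = j"
  by (simp add: sswap_def)

lemma sswap_comp[simp]: "sswap i \<circ> sswap i = id"
  by (auto simp: fun_eq_iff)

lemma sswap_permutes: "1 \<le> i \<Longrightarrow> i < n \<Longrightarrow> sswap i permutes {1..n}"
  unfolding permutes_def
  apply (intro conjI allI impI)
   apply (auto simp: sswap_def)[1]
  apply (rule_tac a="sswap i y" in ex1I)
   apply (auto simp: sswap_def split: if_splits)
  done

lemma pow_cons: "perm_of_word (i # w) = perm_of_word w \<circ> sswap i"
proof -
  have "\<And>g. fold (\<lambda>i f. sswap i \<circ> f) w g = perm_of_word w \<circ> g"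
    unfolding perm_of_word_def
    by (induction w rule: rev_induct) (auto simp: comp_assoc)
  then show ?thesis unfolding perm_of_word_def by simp
qed

lemma pow_snoc: "perm_of_word (w @ [i]) = sswap i \<circ> perm_of_word w"
  unfolding perm_of_word_def by simp

lemma pow_nil[simp]: "perm_of_word [] = id"
  unfolding perm_of_word_def by simp

lemma pow_permutes: "\<forall>i\<in>set w. 1 \<le> i \<and> i < n \<Longrightarrow> perm_of_word w permutes {1..n}"
proof (induction w)
  case Nil then show ?case using permutes_id[of "{1..n}"] by (simp add: id_def)
next
  case (Cons a w)
  have "sswap a permutes {1..n}" using Cons.prems by (intro sswap_permutes) auto
  moreover have "perm_of_word w permutes {1..n}" using Cons by auto
  ultimately
  show ?case unfolding pow_cons by (rule permutes_compose)
qed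

definition invs :: "nat \<Rightarrow> (nat \<Rightarrow> nat) \<Rightarrow> (nat \<times> nat) set" where
  "invs n p = {(i, j). 1 \<le> i \<and> i < j \<and> j \<le> n \<and> p j < p i}"

lemma invs_finite: "finite (invs n p)"
  by (rule finite_subset[of _ "{1..n} \<times> {1..n}"]) (auto simp: invs_def)

lemma inv_len_invs: "inv_len n p = card (invs n p)"
  by (simp add: inv_len_def invs_def)



lemma sswap_less: "i < j \<Longrightarrow> (i,j) \<noteq> (a, a+1) \<Longrightarrow> sswap a i < sswap a j"
  by (auto simp: sswap_def)

lemma sswap_ge1: "1 \<le> a \<Longrightarrow> 1 \<le> i \<Longrightarrow> 1 \<le> sswap a i"
  by (auto simp: sswap_def)

lemma sswap_len: "a < n \<Longrightarrow> i \<le> n \<Longrightarrow> sswap a i \<le> n"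
  by (auto simp: sswap_def)

lemma inv_len_comp_up:
  assumes "1 \<le> a" "a < n" "p a < p (a+1)"
  shows "inv_len n (p \<circ> sswap a) = Suc (inv_len n p)"
proof -
  let ?s = "sswap a"
  let ?f = "\<lambda>(i,j). (?s i, ?s j)"
  have ninv: "(a, a+1) \<notin> invs n p" using assms by (auto simp: invs_def)
  have eq: "invs n (p \<circ> ?s) = insert (a, a+1) (?f ` invs n p)"
  proof (intro equalityI subsetI)
    fix x assume x: "x \<in> invs n (p \<circ> ?s)"
    obtain i j where ij: "x = (i,j)" by (cases x)
    show "x \<in> insert (a, a+1) (?f ` invs n p)"
    proof (cases "(i,j) = (a, a+1)")
      case True then show ?thesis using ij by simp
    next
      case False
      have "(?s i, ?s j) \<in> invs n p"
        using x ij False sswap_less[of i j a] sswap_ge1[of a i] sswap_len[of a n j] assms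
        by (auto simp: invs_def)
      moreover have "x = ?f (?s i, ?s j)" using ij by simp
      ultimately show ?thesis by blast
    qed
  next
    fix x assume x: "x \<in> insert (a, a+1) (?f ` invs n p)"
    show "x \<in> invs n (p \<circ> ?s)"
    proof (cases "x = (a, a+1)")
      case True then show ?thesis using assms by (auto simp: invs_def sswap_def)
    next
      case False
      then obtain i j where ij: "(i,j) \<in> invs n p" "x = (?s i, ?s j)" using x by auto
      have "(i,j) \<noteq> (a, a+1)" using ij ninv by auto
      then show ?thesis
        using ij sswap_less[of i j a] sswap_ge1[of a i] sswap_len[of a n j] assms
        by (auto simp: invs_def)
    qed
  qed
  have notin: "(a, a+1) \<notin> ?f ` invs n p"
  proof
    assume "(a, a+1) \<in> ?f ` invs n p"
    then obtain i j where "(i,j) \<in> invs n p" "?s i = a" "?s j = a+1" by auto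
    then show False by (auto simp: invs_def sswap_def split: if_splits)
  qed
  have inj: "inj_on ?f (invs n p)"
    by (rule inj_onI) (auto simp: sswap_def split: if_splits)
  show ?thesis unfolding inv_len_invs eq
    using notin inj invs_finite card_image by (simp add: card_insert_if)
qed

lemma inv_len_comp_down:
  assumes "1 \<le> a" "a < n" "p (a+1) < p a"
  shows "Suc (inv_len n (p \<circ> sswap a)) = inv_len n p"
proof -
  have "inv_len n ((p \<circ> sswap a) \<circ> sswap a) = Suc (inv_len n (p \<circ> sswap a))"
    using assms by (intro inv_len_comp_up) (auto simp: sswap_def)
  then show ?thesis by (simp add: comp_assoc)
qed

lemma inv_len_inv:
  assumes "p permutes {1..n}"
  shows "inv_len n (inv p) = inv_len n p"
proof -
  let ?f = "\<lambda>(i,j). (p j, p i)"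
  have pin: "\<And>i. i \<in> {1..n} \<Longrightarrow> p i \<in> {1..n}" using permutes_in_image[OF assms] by blast
  have ipin: "\<And>i. i \<in> {1..n} \<Longrightarrow> inv p i \<in> {1..n}"
    using permutes_in_image[OF permutes_inv[OF assms]] by blast
  have pi: "\<And>i. inv p (p i) = i" using permutes_inverses[OF assms] by blast
  have ip: "\<And>i. p (inv p i) = i" using permutes_inverses[OF assms] by blast
  have "bij_betw ?f (invs n p) (invs n (inv p))"
  proof (rule bij_betw_imageI)
    show "inj_on ?f (invs n p)" by (rule inj_onI) (auto simp: invs_def dest: permutes_inj[OF assms, THEN injD])
    show "?f ` invs n p = invs n (inv p)"
    proof (intro equalityI subsetI)
      fix x assume "x \<in> ?f ` invs n p"
      then obtain i j where ij: "(i,j) \<in> invs n p" "x = (p j, p i)" by auto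
      then show "x \<in> invs n (inv p)" using pin[of i] pin[of j] by (auto simp: invs_def pi)
    next
      fix x assume x: "x \<in> invs n (inv p)"
      obtain i j where ij: "x = (i,j)" by (cases x)
      have "(inv p j, inv p i) \<in> invs n p" using x ij ipin[of i] ipin[of j] by (auto simp: invs_def ip)
      moreover have "x = ?f (inv p j, inv p i)" using ij by (simp add: ip)
      ultimately show "x \<in> ?f ` invs n p" by blast
    qed
  qed
  then show ?thesis unfolding inv_len_invs by (simp add: bij_betw_same_card)
qed

lemma inv_sswap: "inv (sswap a) = sswap a"
  by (rule inv_unique_comp) auto

lemma bij_sswap: "bij (sswap a)"
  by (rule o_bij[of "sswap a"]) auto

lemma inv_len_lcomp_up:
  assumes "p permutes {1..n}" "1 \<le> a" "a < n" "inv p a < inv p (a+1)"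
  shows "inv_len n (sswap a \<circ> p) = Suc (inv_len n p)"
proof -
  have bp: "bij p" using assms(1) permutes_bij by blast
  have "inv (sswap a \<circ> p) = inv p \<circ> sswap a"
    using o_inv_distrib[OF bij_sswap bp] inv_sswap by simp
  moreover have "(sswap a \<circ> p) permutes {1..n}"
    using assms by (intro permutes_compose sswap_permutes) auto
  ultimately have "inv_len n (sswap a \<circ> p) = inv_len n (inv p \<circ> sswap a)"
    using inv_len_inv by metis
  also have "\<dots> = Suc (inv_len n (inv p))" using assms by (intro inv_len_comp_up) auto
  also have "\<dots> = Suc (inv_len n p)" using inv_len_inv assms by simp
  finally show ?thesis .
qed

lemma inv_len_lcomp_down:
  assumes "p permutes {1..n}" "1 \<le> a" "a < n" "inv p (a+1) < inv p a"
  shows "Suc (inv_len n (sswap a \<circ> p)) = inv_len n p"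
proof -
  have pp: "(sswap a \<circ> p) permutes {1..n}"
    using assms by (intro permutes_compose sswap_permutes) auto
  have bp: "bij p" using assms(1) permutes_bij by blast
  have "inv (sswap a \<circ> p) = inv p \<circ> sswap a"
    using o_inv_distrib[OF bij_sswap bp] inv_sswap by simp
  then have "inv (sswap a \<circ> p) a < inv (sswap a \<circ> p) (a+1)"
    using assms by (simp add: sswap_def)
  from inv_len_lcomp_up[OF pp assms(2,3) this] show ?thesis
    by (simp add: comp_assoc[symmetric])
qed



lemma permutes_sswap_comp:
  "p permutes {1..n} \<Longrightarrow> 1 \<le> a \<Longrightarrow> a < n \<Longrightarrow> (p \<circ> sswap a) permutes {1..n}"
  by (intro permutes_compose sswap_permutes)

lemma permutes_comp_sswap:
  "p permutes {1..n} \<Longrightarrow> 1 \<le> a \<Longrightarrow> a < n \<Longrightarrow> (sswap a \<circ> p) permutes {1..n}"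
  by (intro permutes_compose sswap_permutes)

lemma incr_chain:
  assumes inc: "\<forall>a. 1 \<le> a \<and> a < n \<longrightarrow> (p::nat\<Rightarrow>nat) a < p (a+1)"
  shows "1 \<le> x \<Longrightarrow> x + d \<le> n \<Longrightarrow> p x + d \<le> p (x + d)"
proof (induction d)
  case 0 then show ?case by simp
next
  case (Suc d)
  then have "p (x+d) < p (x + d + 1)" using inc by auto
  then show ?case using Suc by simp
qed

lemma incr_id:
  fixes p :: "nat \<Rightarrow> nat"
  assumes p: "p permutes {1..n}" and inc: "\<forall>a. 1 \<le> a \<and> a < n \<longrightarrow> p a < p (a+1)"
  shows "p = id"
proof (rule ext)
  fix x
  show "p x = id x"
  proof (cases "x \<in> {1..n}")
    case False then show ?thesis using permutes_not_in[OF p] by simp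
  next
    case True
    have pin: "\<And>i. i \<in> {1..n} \<Longrightarrow> p i \<in> {1..n}" using permutes_in_image[OF p] by blast
    have "p x + (n - x) \<le> p n" using incr_chain[OF inc, of x "n - x"] True by simp
    moreover have "p n \<le> n" using pin[of n] True by auto
    moreover have "p 1 + (x - 1) \<le> p x" using incr_chain[OF inc, of 1 "x - 1"] True by simp
    moreover have "1 \<le> p 1" using pin[of 1] True by auto
    ultimately show ?thesis using True by simp
  qed
qed

lemma inv_len_id[simp]: "inv_len n id = 0"
proof -
  show ?thesis by (auto simp: inv_len_def card_eq_0_iff)
qed

lemma inv_len_id'[simp]: "inv_len n (\<lambda>x. x) = 0"
  using inv_len_id[of n] by (simp add: id_def)

lemma inv_len_pow_le:
  "\<forall>i\<in>set w. 1 \<le> i \<and> i < n \<Longrightarrow> inv_len n (perm_of_word w) \<le> length w"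
proof (induction w)
  case Nil then show ?case by simp
next
  case (Cons a w)
  let ?p = "perm_of_word w"
  have p: "?p permutes {1..n}" using Cons pow_permutes by auto
  have a: "1 \<le> a" "a < n" using Cons by auto
  have ne: "?p a \<noteq> ?p (a+1)" using permutes_inj[OF p] by (auto dest: injD)
  show ?case
  proof (cases "?p a < ?p (a+1)")
    case True
    have "inv_len n (perm_of_word (a#w)) = Suc (inv_len n ?p)"
      by (simp only: pow_cons inv_len_comp_up[OF a True])
    then show ?thesis using Cons by simp
  next
    case False
    then have d: "?p (a+1) < ?p a" using ne by simp
    have "Suc (inv_len n (perm_of_word (a#w))) = inv_len n ?p"
      by (simp only: pow_cons inv_len_comp_down[OF a d])
    then show ?thesis using Cons by simp
  qed
qed

lemma reduced_cons:
  assumes "reduced_word n p (i # u)"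
  shows "p (i+1) < p i" "reduced_word n (p \<circ> sswap i) u"
proof -
  have i: "1 \<le> i" "i < n" and lett: "\<forall>j\<in>set u. 1 \<le> j \<and> j < n"
    and len: "length u + 1 = inv_len n p" and pw: "perm_of_word u \<circ> sswap i = p"
    using assms by (auto simp: reduced_word_def pow_cons)
  have p: "p permutes {1..n}" using assms pow_permutes unfolding reduced_word_def by blast
  have pu: "perm_of_word u = p \<circ> sswap i" unfolding pw[symmetric] by (simp add: comp_assoc)
  have le: "inv_len n (p \<circ> sswap i) \<le> length u" using inv_len_pow_le[OF lett] pu by simp
  have ne: "p i \<noteq> p (i+1)" using permutes_inj[OF p] by (auto dest: injD)
  show desc: "p (i+1) < p i"
  proof (rule ccontr)
    assume "\<not> ?thesis"
    then have "p i < p (i+1)" using ne by simp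
    from inv_len_comp_up[OF i this] le len show False by simp
  qed
  have "Suc (inv_len n (p \<circ> sswap i)) = inv_len n p" by (rule inv_len_comp_down[OF i desc])
  then show "reduced_word n (p \<circ> sswap i) u"
    unfolding reduced_word_def using lett len pu by simp
qed

lemma reduced_cons_intro:
  assumes "1 \<le> i" "i < n" "p (i+1) < p i" "reduced_word n (p \<circ> sswap i) u"
  shows "reduced_word n p (i # u)"
proof -
  have "Suc (inv_len n (p \<circ> sswap i)) = inv_len n p" by (rule inv_len_comp_down[OF assms(1-3)])
  moreover have "perm_of_word (i # u) = p"
    using assms(4) by (auto simp: reduced_word_def pow_cons comp_assoc)
  ultimately show ?thesis using assms by (auto simp: reduced_word_def)
qed

lemma reduced_exists:
  "p permutes {1..n} \<Longrightarrow> \<exists>w. reduced_word n p w"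
proof (induction "inv_len n p" arbitrary: p rule: less_induct)
  case less
  show ?case
  proof (cases "\<exists>a. 1 \<le> a \<and> a < n \<and> p (a+1) < p a")
    case True
    then obtain a where a: "1 \<le> a" "a < n" "p (a+1) < p a" by blast
    have "Suc (inv_len n (p \<circ> sswap a)) = inv_len n p" by (rule inv_len_comp_down[OF a])
    moreover have "(p \<circ> sswap a) permutes {1..n}" using less a by (intro permutes_sswap_comp)
    ultimately obtain u where "reduced_word n (p \<circ> sswap a) u" using less by force
    then show ?thesis using reduced_cons_intro[OF a] by blast
  next
    case False
    have "\<forall>a. 1 \<le> a \<and> a < n \<longrightarrow> p a < p (a+1)"
    proof (intro allI impI)
      fix a assume a: "1 \<le> a \<and> a < n"
      have "p a \<noteq> p (a+1)" using permutes_inj[OF less.prems] by (auto dest: injD)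
      then show "p a < p (a+1)" using False a by auto
    qed
    then have "p = id" using incr_id less.prems by blast
    then have "reduced_word n p []" by (simp add: reduced_word_def)
    then show ?thesis by blast
  qed
qed

lemma rword_reduced: "p permutes {1..n} \<Longrightarrow> reduced_word n p (rword n p)"
  unfolding rword_def using reduced_exists by (rule someI_ex)

lemma reduced_permutes: "reduced_word n p w \<Longrightarrow> p permutes {1..n}"
  unfolding reduced_word_def using pow_permutes by blast

lemma sswap_comm: "i + 1 < j \<Longrightarrow> sswap i \<circ> sswap j = sswap j \<circ> sswap i"
  by (auto simp: fun_eq_iff sswap_def)

lemma sswap_braid: "sswap i \<circ> sswap (i+1) \<circ> sswap i = sswap (i+1) \<circ> sswap i \<circ> sswap (i+1)"
  by (auto simp: fun_eq_iff sswap_def)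

definition wprod :: "(nat \<Rightarrow> 'a::ring_1) \<Rightarrow> nat list \<Rightarrow> 'a" where
  "wprod g w = prod_list (map g w)"

lemma wprod_cons[simp]: "wprod g (i # w) = g i * wprod g w"
  by (simp add: wprod_def)

lemma wprod_nil[simp]: "wprod g [] = 1"
  by (simp add: wprod_def)

lemma wprod_append[simp]: "wprod g (u @ v) = wprod g u * wprod g v"
  by (simp add: wprod_def)

lemma matsumoto_step:
  fixes g :: "nat \<Rightarrow> 'a::ring_1"
  assumes comm: "\<forall>i j. 1 \<le> i \<and> i + 1 < j \<and> j < n \<longrightarrow> g i * g j = g j * g i"
    and braid: "\<forall>i. 1 \<le> i \<and> i + 1 < n \<longrightarrow> g i * g (i + 1) * g i = g (i + 1) * g i * g (i + 1)"
    and IH: "\<And>p' u v. inv_len n p' < inv_len n p \<Longrightarrow> reduced_word n p' u \<Longrightarrow> reduced_word n p' v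
               \<Longrightarrow> wprod g u = wprod g v"
    and ru: "reduced_word n p (i # u)" and rv: "reduced_word n p (j # v)" and ij: "i < j"
  shows "wprod g (i # u) = wprod g (j # v)"
proof -
  have p: "p permutes {1..n}" using ru by (rule reduced_permutes)
  have i: "1 \<le> i" "i < n" and j: "1 \<le> j" "j < n"
    using ru rv by (auto simp: reduced_word_def)
  have di: "p (i+1) < p i" and ru': "reduced_word n (p \<circ> sswap i) u" using reduced_cons[OF ru] by auto
  have dj: "p (j+1) < p j" and rv': "reduced_word n (p \<circ> sswap j) v" using reduced_cons[OF rv] by auto
  have li: "inv_len n (p \<circ> sswap i) < inv_len n p" using inv_len_comp_down[OF i di] by simp
  have lj: "inv_len n (p \<circ> sswap j) < inv_len n p" using inv_len_comp_down[OF j dj] by simp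
  show ?thesis
  proof (cases "i + 1 < j")
    case True
    let ?r = "rword n (p \<circ> sswap i \<circ> sswap j)"
    have pij: "(p \<circ> sswap i \<circ> sswap j) permutes {1..n}"
      using p i j by (intro permutes_sswap_comp) auto
    have rr: "reduced_word n (p \<circ> sswap i \<circ> sswap j) ?r" using rword_reduced[OF pij] .
    have r1: "reduced_word n (p \<circ> sswap i) (j # ?r)"
      by (rule reduced_cons_intro) (use j dj True rr in \<open>auto simp: sswap_def\<close>)
    have e: "p \<circ> sswap i \<circ> sswap j = p \<circ> sswap j \<circ> sswap i"
      using sswap_comm[OF True] by (simp add: comp_assoc)
    have r2: "reduced_word n (p \<circ> sswap j) (i # ?r)"
      by (rule reduced_cons_intro) (use i di True rr e in \<open>auto simp: sswap_def\<close>)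
    have "wprod g u = wprod g (j # ?r)" using IH[OF li ru' r1] .
    moreover have "wprod g v = wprod g (i # ?r)" using IH[OF lj rv' r2] .
    moreover have "g i * g j = g j * g i" using comm i j True by auto
    ultimately show ?thesis by (simp add: mult.assoc[symmetric])
  next
    case False
    then have j1: "j = i + 1" using ij by simp
    let ?p3 = "p \<circ> sswap i \<circ> sswap (i+1) \<circ> sswap i"
    have p3: "?p3 permutes {1..n}"
      using p i j j1 by (intro permutes_sswap_comp) auto
    let ?r = "rword n ?p3"
    have rr: "reduced_word n ?p3 ?r" using rword_reduced[OF p3] .
    have a1: "reduced_word n (p \<circ> sswap i \<circ> sswap (i+1)) (i # ?r)"
      by (rule reduced_cons_intro) (use i di dj j1 rr in \<open>auto simp: sswap_def\<close>)
    have a2: "reduced_word n (p \<circ> sswap i) ((i+1) # i # ?r)"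
      by (rule reduced_cons_intro) (use j di dj j1 a1 in \<open>auto simp: sswap_def\<close>)
    have e: "?p3 = p \<circ> sswap (i+1) \<circ> sswap i \<circ> sswap (i+1)"
      using sswap_braid[of i] by (simp add: comp_assoc)
    have b1: "reduced_word n (p \<circ> sswap (i+1) \<circ> sswap i) ((i+1) # ?r)"
      by (rule reduced_cons_intro) (use j di dj j1 rr e in \<open>auto simp: sswap_def\<close>)
    have b2: "reduced_word n (p \<circ> sswap (i+1)) (i # (i+1) # ?r)"
      by (rule reduced_cons_intro) (use i di dj j1 b1 in \<open>auto simp: sswap_def\<close>)
    have "wprod g u = wprod g ((i+1) # i # ?r)" using IH[OF li ru' a2] .
    moreover have "wprod g v = wprod g (i # (i+1) # ?r)" using IH[OF lj rv' b2[folded j1]] j1 by simp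
    moreover have "g i * g (i+1) * g i = g (i+1) * g i * g (i+1)" using braid i j j1 by auto
    ultimately show ?thesis using j1 by (simp add: mult.assoc[symmetric])
  qed
qed

lemma matsumoto:
  fixes g :: "nat \<Rightarrow> 'a::ring_1"
  assumes comm: "\<forall>i j. 1 \<le> i \<and> i + 1 < j \<and> j < n \<longrightarrow> g i * g j = g j * g i"
    and braid: "\<forall>i. 1 \<le> i \<and> i + 1 < n \<longrightarrow> g i * g (i + 1) * g i = g (i + 1) * g i * g (i + 1)"
  shows "reduced_word n p u \<Longrightarrow> reduced_word n p v \<Longrightarrow> wprod g u = wprod g v"
proof (induction "inv_len n p" arbitrary: p u v rule: less_induct)
  case less
  show ?case
  proof (cases u)
    case Nil
    then have "inv_len n p = 0" using less by (simp add: reduced_word_def)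
    then have "v = []" using less by (simp add: reduced_word_def)
    then show ?thesis using Nil by simp
  next
    case (Cons i u')
    then have "v \<noteq> []" using less by (auto simp: reduced_word_def)
    then obtain j v' where v: "v = j # v'" by (cases v) auto
    have ru: "reduced_word n p (i # u')" using less Cons by simp
    have rv: "reduced_word n p (j # v')" using less v by simp
    consider "i = j" | "i < j" | "j < i" by linarith
    then show ?thesis
    proof cases
      case 1
      have d: "p (i+1) < p i" and r1: "reduced_word n (p \<circ> sswap i) u'" using reduced_cons[OF ru] by auto
      have r2: "reduced_word n (p \<circ> sswap i) v'" using reduced_cons[OF rv] 1 by auto
      have i: "1 \<le> i" "i < n" using ru by (auto simp: reduced_word_def)
      have "inv_len n (p \<circ> sswap i) < inv_len n p" using inv_len_comp_down[OF i d] by simp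
      then have "wprod g u' = wprod g v'" using less r1 r2 by blast
      then show ?thesis using Cons v 1 by simp
    next
      case 2
      show ?thesis using matsumoto_step[OF comm braid _ ru rv 2] less Cons v by blast
    next
      case 3
      show ?thesis using matsumoto_step[OF comm braid _ rv ru 3] less Cons v by metis
    qed
  qed
qed



locale hecke =
  fixes \<sigma> \<sigma>' :: "nat \<Rightarrow> 'a::ring_1" and q qi :: 'a and n :: nat
  assumes qqi: "q * qi = 1" and qiq: "qi * q = 1" and qc: "\<forall>y. q * y = y * q"
    and sinv: "\<forall>i. 1 \<le> i \<and> i < n \<longrightarrow> \<sigma> i * \<sigma>' i = 1 \<and> \<sigma>' i * \<sigma> i = 1"
    and quad: "\<forall>i. 1 \<le> i \<and> i < n \<longrightarrow> (\<sigma> i - q) * (\<sigma> i + qi) = 0"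
    and comm: "\<forall>i j. 1 \<le> i \<and> i + 1 < j \<and> j < n \<longrightarrow> \<sigma> i * \<sigma> j = \<sigma> j * \<sigma> i"
    and braid: "\<forall>i. 1 \<le> i \<and> i + 1 < n \<longrightarrow>
           \<sigma> i * \<sigma> (i + 1) * \<sigma> i = \<sigma> (i + 1) * \<sigma> i * \<sigma> (i + 1)"
begin

lemma qcomm: "q * y = y * q" using qc by blast

lemma qicomm: "qi * y = y * qi"
proof -
  have "qi * y = qi * y * (q * qi)" using qqi by simp
  also have "\<dots> = qi * (q * y) * qi" by (simp add: qcomm mult.assoc)
  also have "\<dots> = y * qi" using qiq by (simp add: mult.assoc[symmetric])
  finally show ?thesis .
qed

lemma sq: "1 \<le> i \<Longrightarrow> i < n \<Longrightarrow> \<sigma> i * \<sigma> i = (q - qi) * \<sigma> i + 1"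
proof -
  assume "1 \<le> i" "i < n"
  then have "(\<sigma> i - q) * (\<sigma> i + qi) = 0" using quad by blast
  then have "\<sigma> i * \<sigma> i + \<sigma> i * qi - q * \<sigma> i - q * qi = 0" by (simp add: algebra_simps)
  then show ?thesis using qqi qicomm[of "\<sigma> i"] by (simp add: algebra_simps)
qed

lemma sigma'_eq: "1 \<le> i \<Longrightarrow> i < n \<Longrightarrow> \<sigma>' i = \<sigma> i - (q - qi)"
proof -
  assume i: "1 \<le> i" "i < n"
  have "\<sigma> i * (\<sigma> i - (q - qi)) = 1" using sq[OF i] qcomm qicomm by (simp add: algebra_simps)
  then have "\<sigma>' i * (\<sigma> i * (\<sigma> i - (q - qi))) = \<sigma>' i" by simp
  then show ?thesis using sinv i by (simp add: mult.assoc[symmetric])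
qed

lemma comm': "\<forall>i j. 1 \<le> i \<and> i + 1 < j \<and> j < n \<longrightarrow> \<sigma>' i * \<sigma>' j = \<sigma>' j * \<sigma>' i"
proof (intro allI impI)
  fix i j assume h: "1 \<le> i \<and> i + 1 < j \<and> j < n"
  then have "\<sigma> i * \<sigma> j = \<sigma> j * \<sigma> i" using comm by blast
  note h2 = this
  have e1: "\<sigma>' i = \<sigma> i - (q - qi)" and e2: "\<sigma>' j = \<sigma> j - (q - qi)"
    using h sigma'_eq[of i] sigma'_eq[of j] by auto
  have c: "\<And>y. (q - qi) * y = y * (q - qi)" using qcomm qicomm by (simp add: algebra_simps)
  have ci: "(q - qi) * \<sigma> i = \<sigma> i * (q - qi)" and cj: "(q - qi) * \<sigma> j = \<sigma> j * (q - qi)"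
    using c by auto
  show "\<sigma>' i * \<sigma>' j = \<sigma>' j * \<sigma>' i"
    unfolding e1 e2 left_diff_distrib right_diff_distrib
    by (simp only: h2 ci cj) (simp add: algebra_simps qcomm[of "\<sigma> i"] qcomm[of "\<sigma> j"] qicomm[of "\<sigma> i"] qicomm[of "\<sigma> j"])
qed

lemma braid': "\<forall>i. 1 \<le> i \<and> i + 1 < n \<longrightarrow>
           \<sigma>' i * \<sigma>' (i + 1) * \<sigma>' i = \<sigma>' (i + 1) * \<sigma>' i * \<sigma>' (i + 1)"
proof (intro allI impI)
  fix i assume h: "1 \<le> i \<and> i + 1 < n"
  let ?a = "\<sigma> i" and ?b = "\<sigma> (i+1)" and ?a' = "\<sigma>' i" and ?b' = "\<sigma>' (i+1)"
  have ia: "?a * ?a' = 1" "?a' * ?a = 1" and ib: "?b * ?b' = 1" "?b' * ?b = 1" using sinv h by auto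
  have B: "?a * ?b * ?a = ?b * ?a * ?b" using braid h by blast
  let ?X = "?a' * ?b' * ?a'" and ?Y = "?b' * ?a' * ?b'"
  have XB: "?X * (?a * ?b * ?a) = 1"
  proof -
    have "?X * (?a * ?b * ?a) = ?a' * (?b' * (?a' * ?a) * ?b) * ?a" by (simp add: mult.assoc)
    also have "\<dots> = 1" using ia ib by (simp add: mult.assoc)
    finally show ?thesis .
  qed
  have BY: "(?b * ?a * ?b) * ?Y = 1"
  proof -
    have "(?b * ?a * ?b) * ?Y = ?b * (?a * (?b * ?b') * ?a') * ?b'" by (simp add: mult.assoc)
    also have "\<dots> = 1" using ia ib by (simp add: mult.assoc)
    finally show ?thesis .
  qed
  have "?X = ?X * ((?b * ?a * ?b) * ?Y)" using BY by simp
  also have "\<dots> = (?X * (?a * ?b * ?a)) * ?Y" using B by (simp add: mult.assoc)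
  also have "\<dots> = ?Y" using XB by simp
  finally show "?X = ?Y" .
qed

lemma perm_ne: "(p::nat\<Rightarrow>nat) permutes S \<Longrightarrow> p i \<noteq> p (i+1)"
proof
  assume p: "p permutes S" and e: "p i = p (i+1)"
  have "i = i + 1" using injD[OF permutes_inj[OF p] e] .
  then show False by simp
qed

abbreviation T :: "(nat \<Rightarrow> nat) \<Rightarrow> 'a" where "T p \<equiv> pbraid \<sigma> n p"

lemma T_red: "reduced_word n p w \<Longrightarrow> T p = wprod \<sigma> w"
proof -
  assume r: "reduced_word n p w"
  have "reduced_word n p (rword n p)" using rword_reduced[OF reduced_permutes[OF r]] .
  then have "wprod \<sigma> (rword n p) = wprod \<sigma> w" using matsumoto[OF comm braid _ r] by blast
  then show ?thesis by (simp add: pbraid_def wprod_def)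
qed

lemma T'_red: "reduced_word n p w \<Longrightarrow> pbraid \<sigma>' n p = wprod \<sigma>' w"
proof -
  assume r: "reduced_word n p w"
  have "reduced_word n p (rword n p)" using rword_reduced[OF reduced_permutes[OF r]] .
  then have "wprod \<sigma>' (rword n p) = wprod \<sigma>' w" using matsumoto[OF comm' braid' _ r] by blast
  then show ?thesis by (simp add: pbraid_def wprod_def)
qed

lemma T_id: "T id = 1"
proof -
  have "reduced_word n id []" by (simp add: reduced_word_def)
  then show ?thesis using T_red by simp
qed

lemma T_left:
  assumes p: "p permutes {1..n}" and i: "1 \<le> i" "i < n" and lt: "p i < p (i+1)"
  shows "T (p \<circ> sswap i) = \<sigma> i * T p"
proof -
  have r: "reduced_word n p (rword n p)" using rword_reduced[OF p] .
  have h: "reduced_word n (p \<circ> sswap i) (i # rword n p)"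
    by (rule reduced_cons_intro) (use i lt r in \<open>auto simp: sswap_def comp_assoc\<close>)
  show ?thesis using T_red[OF h] T_red[OF r] by simp
qed

lemma T_right:
  assumes p: "p permutes {1..n}" and i: "1 \<le> i" "i < n" and lt: "inv p i < inv p (i+1)"
  shows "T (sswap i \<circ> p) = T p * \<sigma> i"
proof -
  have r: "reduced_word n p (rword n p)" using rword_reduced[OF p] .
  have h: "reduced_word n (sswap i \<circ> p) (rword n p @ [i])"
    using r i inv_len_lcomp_up[OF p i lt] by (auto simp: reduced_word_def pow_snoc)
  show ?thesis using T_red[OF h] T_red[OF r] by simp
qed

end

inductive spn :: "(nat \<Rightarrow> 'a::ring_1) \<Rightarrow> 'a \<Rightarrow> 'a \<Rightarrow> nat \<Rightarrow> nat \<Rightarrow> 'a \<Rightarrow> bool"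
  for \<sigma> q qi n m where
  base: "p permutes {1..n} \<Longrightarrow> inv_len n p \<le> m \<Longrightarrow> spn \<sigma> q qi n m (pbraid \<sigma> n p)"
| zero: "spn \<sigma> q qi n m 0"
| add: "spn \<sigma> q qi n m a \<Longrightarrow> spn \<sigma> q qi n m b \<Longrightarrow> spn \<sigma> q qi n m (a + b)"
| neg: "spn \<sigma> q qi n m a \<Longrightarrow> spn \<sigma> q qi n m (- a)"
| mq: "spn \<sigma> q qi n m a \<Longrightarrow> spn \<sigma> q qi n m (q * a)"
| mqi: "spn \<sigma> q qi n m a \<Longrightarrow> spn \<sigma> q qi n m (qi * a)"

lemma spn_mono': "m \<le> m' \<Longrightarrow> spn \<sigma> q qi n m a \<Longrightarrow> spn \<sigma> q qi n m' a"
proof -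
  assume mm: "m \<le> m'"
  show "spn \<sigma> q qi n m a \<Longrightarrow> spn \<sigma> q qi n m' a"
  proof (induction rule: spn.induct)
    case (base p) then show ?case using mm by (rule_tac spn.base) auto
  next
    case zero then show ?case by (rule spn.zero)
  next
    case (add a b) show ?case by (rule spn.add[OF add.IH])
  next
    case (neg a) show ?case by (rule spn.neg[OF neg.IH])
  next
    case (mq a) show ?case by (rule spn.mq[OF mq.IH])
  next
    case (mqi a) show ?case by (rule spn.mqi[OF mqi.IH])
  qed
qed

lemma spn_mono: "spn \<sigma> q qi n m a \<Longrightarrow> m \<le> m' \<Longrightarrow> spn \<sigma> q qi n m' a"
  using spn_mono' by blast

lemma spn_diff: "spn \<sigma> q qi n m a \<Longrightarrow> spn \<sigma> q qi n m b \<Longrightarrow> spn \<sigma> q qi n m (a - b)"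
proof -
  assume a: "spn \<sigma> q qi n m a" and b: "spn \<sigma> q qi n m b"
  have "spn \<sigma> q qi n m (a + - b)" by (rule spn.add[OF a spn.neg[OF b]])
  then show ?thesis by simp
qed

lemma spn_c: "spn \<sigma> q qi n m a \<Longrightarrow> spn \<sigma> q qi n m ((q - qi) * a)"
proof -
  assume a: "spn \<sigma> q qi n m a"
  have "spn \<sigma> q qi n m (q * a - qi * a)" by (rule spn_diff[OF spn.mq[OF a] spn.mqi[OF a]])
  then show ?thesis by (simp add: left_diff_distrib)
qed

context hecke begin

lemma spn_sigma: "spn \<sigma> q qi n m a \<Longrightarrow> 1 \<le> i \<Longrightarrow> i < n \<Longrightarrow> spn \<sigma> q qi n (Suc m) (\<sigma> i * a)"
proof (induction rule: spn.induct)
  case (base p)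
  have ne: "p i \<noteq> p (i+1)" using perm_ne[OF base(1)] .
  show ?case
  proof (cases "p i < p (i+1)")
    case True
    have "\<sigma> i * T p = T (p \<circ> sswap i)" using T_left[OF base(1) base(3,4) True] by simp
    moreover have "inv_len n (p \<circ> sswap i) \<le> Suc m"
      using inv_len_comp_up[OF base(3,4) True] base(2) by simp
    moreover have "(p \<circ> sswap i) permutes {1..n}" using base by (intro permutes_sswap_comp)
    ultimately show ?thesis by (simp add: spn.base)
  next
    case False
    let ?p = "p \<circ> sswap i"
    have pp: "?p permutes {1..n}" using base by (intro permutes_sswap_comp)
    have lt: "?p i < ?p (i+1)" using False ne by (auto simp: sswap_def)
    have e0: "p \<circ> sswap i \<circ> sswap i = p" by (simp add: comp_assoc)
    have e: "T p = \<sigma> i * T ?p" using T_left[OF pp base(3,4) lt] unfolding e0 .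
    have "\<sigma> i * T p = (\<sigma> i * \<sigma> i) * T ?p" using e by (simp add: mult.assoc)
    also have "\<dots> = ((q - qi) * \<sigma> i + 1) * T ?p" using sq[OF base(3,4)] by simp
    also have "\<dots> = (q - qi) * (\<sigma> i * T ?p) + T ?p" by (simp add: distrib_right mult.assoc)
    also have "\<dots> = (q - qi) * T p + T ?p" using e by simp
    finally have "\<sigma> i * T p = (q - qi) * T p + T ?p" .
    moreover have "inv_len n ?p \<le> Suc m"
    proof -
      have d: "p (i+1) < p i" using False ne by simp
      show ?thesis using inv_len_comp_down[OF base(3,4) d] base(2) by simp
    qed
    ultimately show ?thesis
      using base pp by (auto intro!: spn.add spn_c spn.base)
  qed
next
  case zero then show ?case by (simp add: spn.zero)
next
  case (add a b) then show ?case by (simp add: distrib_left spn.add)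
next
  case (neg a) then show ?case by (simp add: spn.neg)
next
  case (mq a)
  have "\<sigma> i * (q * a) = q * (\<sigma> i * a)" by (metis mult.assoc qcomm)
  then show ?case using spn.mq[OF mq(2)[OF mq(3,4)]] by simp
next
  case (mqi a)
  have "\<sigma> i * (qi * a) = qi * (\<sigma> i * a)" by (metis mult.assoc qicomm)
  then show ?case using spn.mqi[OF mqi(2)[OF mqi(3,4)]] by simp
qed

lemma spn_one: "spn \<sigma> q qi n 0 1"
  using spn.base[of id n 0 \<sigma> q qi] T_id by (simp add: permutes_id)

lemma wprod'_spn: "\<forall>i\<in>set w. 1 \<le> i \<and> i < n \<Longrightarrow> spn \<sigma> q qi n (length w) (wprod \<sigma>' w)"
proof (induction w)
  case Nil then show ?case using spn_one by simp
next
  case (Cons i w)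
  have i: "1 \<le> i" "i < n" using Cons by auto
  have h: "spn \<sigma> q qi n (length w) (wprod \<sigma>' w)" using Cons by auto
  have "wprod \<sigma>' (i # w) = (\<sigma> i - (q - qi)) * wprod \<sigma>' w"
    using sigma'_eq[OF i] by simp
  also have "\<dots> = \<sigma> i * wprod \<sigma>' w - (q - qi) * wprod \<sigma>' w" by (rule left_diff_distrib)
  finally have "wprod \<sigma>' (i # w) = \<sigma> i * wprod \<sigma>' w - (q - qi) * wprod \<sigma>' w" .
  then show ?case
    using spn_sigma[OF h i] spn_mono[OF spn_c[OF h]] by (auto intro!: spn_diff)
qed

lemma diff_spn: "\<forall>i\<in>set w. 1 \<le> i \<and> i < n \<Longrightarrow> w \<noteq> [] \<Longrightarrow>
   spn \<sigma> q qi n (length w - 1) (wprod \<sigma>' w - wprod \<sigma> w)"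
proof (induction w)
  case Nil then show ?case by simp
next
  case (Cons i w)
  have i: "1 \<le> i" "i < n" using Cons by auto
  have "wprod \<sigma>' (i # w) - wprod \<sigma> (i # w) = (\<sigma> i - (q - qi)) * wprod \<sigma>' w - \<sigma> i * wprod \<sigma> w"
    using sigma'_eq[OF i] by simp
  also have "\<dots> = \<sigma> i * (wprod \<sigma>' w - wprod \<sigma> w) - (q - qi) * wprod \<sigma>' w"
    by (simp add: algebra_simps)
  finally have "wprod \<sigma>' (i # w) - wprod \<sigma> (i # w) = \<sigma> i * (wprod \<sigma>' w - wprod \<sigma> w) - (q - qi) * wprod \<sigma>' w" .
  moreover have "spn \<sigma> q qi n (length w) ((q - qi) * wprod \<sigma>' w)"
    using wprod'_spn Cons by (auto intro: spn_c)
  moreover have "spn \<sigma> q qi n (length w) (\<sigma> i * (wprod \<sigma>' w - wprod \<sigma> w))"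
  proof (cases "w = []")
    case True then show ?thesis by (simp add: spn.zero)
  next
    case False
    then have "spn \<sigma> q qi n (length w - 1) (wprod \<sigma>' w - wprod \<sigma> w)" using Cons by auto
    from spn_sigma[OF this i] show ?thesis using False by simp
  qed
  ultimately show ?case by (auto intro: spn_diff)
qed

end


lemma shift_out: "\<not> (m < i \<and> i \<le> m + k) \<Longrightarrow> shift_perm m k p i = i"
  by (auto simp: shift_perm_def)

lemma shift_in: "m < i \<Longrightarrow> i \<le> m + k \<Longrightarrow> shift_perm m k p i = p (i - m) + m"
  by (simp add: shift_perm_def)

lemma perm_range: "p permutes {1..k} \<Longrightarrow> 1 \<le> i \<Longrightarrow> i \<le> k \<Longrightarrow> 1 \<le> p i \<and> p i \<le> (k::nat)"
  using permutes_in_image[of p "{1..k}" i] by auto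

lemma shift_comp:
  assumes "p permutes {1..k}" "r permutes {1..k}"
  shows "shift_perm m k (p \<circ> r) = shift_perm m k p \<circ> shift_perm m k r"
proof (rule ext)
  fix i
  show "shift_perm m k (p \<circ> r) i = (shift_perm m k p \<circ> shift_perm m k r) i"
  proof (cases "m < i \<and> i \<le> m + k")
    case True
    then have "1 \<le> r (i - m) \<and> r (i - m) \<le> k" using perm_range[OF assms(2), of "i - m"] by auto
    then show ?thesis using True by (simp add: shift_perm_def)
  next
    case False then show ?thesis by (auto simp: shift_perm_def)
  qed
qed

lemma shift_sswap: "1 \<le> b \<Longrightarrow> b < k \<Longrightarrow> shift_perm m k (sswap b) = sswap (m + b)"
  by (rule ext) (auto simp: shift_perm_def sswap_def)

lemma shift_id: "shift_perm m k id = id"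
  by (rule ext) (auto simp: shift_perm_def)

lemma shift_permutes:
  assumes p: "p permutes {1..k}" and mk: "m + k \<le> n"
  shows "shift_perm m k p permutes {1..n}"
proof (rule bij_imp_permutes)
  let ?s = "shift_perm m k p"
  have into: "?s ` {1..n} \<subseteq> {1..n}"
  proof
    fix y assume "y \<in> ?s ` {1..n}"
    then obtain i where i: "i \<in> {1..n}" "y = ?s i" by auto
    show "y \<in> {1..n}"
    proof (cases "m < i \<and> i \<le> m + k")
      case True
      then have "1 \<le> p (i - m) \<and> p (i - m) \<le> k" using perm_range[OF p, of "i - m"] by auto
      then show ?thesis using i True mk by (simp add: shift_perm_def)
    next
      case False then show ?thesis using i by (auto simp: shift_perm_def)
    qed
  qed
  have inj: "inj_on ?s {1..n}"
  proof (rule inj_onI)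
    fix x y assume x: "x \<in> {1..n}" and y: "y \<in> {1..n}" and e: "?s x = ?s y"
    have rx: "m < x \<Longrightarrow> x \<le> m + k \<Longrightarrow> 1 \<le> p (x - m) \<and> p (x - m) \<le> k"
      using perm_range[OF p, of "x - m"] by auto
    have ry: "m < y \<Longrightarrow> y \<le> m + k \<Longrightarrow> 1 \<le> p (y - m) \<and> p (y - m) \<le> k"
      using perm_range[OF p, of "y - m"] by auto
    have ij: "inj_on p {1..k}" using permutes_inj[OF p] inj_on_subset by blast
    show "x = y"
    proof (cases "m < x \<and> x \<le> m + k")
      case True note tx = this
      show ?thesis
      proof (cases "m < y \<and> y \<le> m + k")
        case True
        then have "p (x - m) = p (y - m)" using e tx by (auto simp: shift_perm_def split: if_splits)
        moreover have "x - m \<in> {1..k}" "y - m \<in> {1..k}" using tx True by auto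
        ultimately have "x - m = y - m" using inj_onD[OF ij] by blast
        then show ?thesis using tx True by arith
      next
        case False then show ?thesis using e tx rx by (auto simp: shift_perm_def split: if_splits)
      qed
    next
      case False note fx = this
      show ?thesis
      proof (cases "m < y \<and> y \<le> m + k")
        case True then show ?thesis using e fx ry by (auto simp: shift_perm_def split: if_splits)
      next
        case False then show ?thesis using e fx by (auto simp: shift_perm_def split: if_splits)
      qed
    qed
  qed
  show "bij_betw ?s {1..n} {1..n}"
    unfolding bij_betw_def using inj endo_inj_surj[OF _ into inj] by simp
  show "\<And>x. x \<notin> {1..n} \<Longrightarrow> ?s x = x"
    using mk by (auto simp: shift_perm_def)
qed

lemma shift_inv:
  assumes p: "p permutes {1..k}"
  shows "inv (shift_perm m k p) = shift_perm m k (inv p)"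
proof -
  have ip: "inv p permutes {1..k}" using permutes_inv[OF p] .
  have "shift_perm m k p \<circ> shift_perm m k (inv p) = id"
    using shift_comp[OF p ip] permutes_inv_o(1)[OF p] shift_id by metis
  moreover have "shift_perm m k (inv p) \<circ> shift_perm m k p = id"
    using shift_comp[OF ip p] permutes_inv_o(2)[OF p] shift_id by metis
  ultimately show ?thesis by (rule inv_unique_comp)
qed

lemma sum_split_invol:
  assumes fin: "finite P" and cl: "\<And>p. p \<in> P \<Longrightarrow> f p \<in> P" and inv: "\<And>p. p \<in> P \<Longrightarrow> f (f p) = p"
    and A: "A \<subseteq> P" and sw: "\<And>p. p \<in> P \<Longrightarrow> p \<in> A \<longleftrightarrow> f p \<notin> A"
  shows "sum g P = (\<Sum>p\<in>A. g p + g (f p))"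
proof -
  have PA: "P = A \<union> f ` A"
  proof (intro equalityI subsetI)
    fix p assume p: "p \<in> P"
    show "p \<in> A \<union> f ` A"
    proof (cases "p \<in> A")
      case False
      then have "f p \<in> A" using sw[OF p] by blast
      then have "f (f p) \<in> f ` A" by blast
      then show ?thesis using inv[OF p] by simp
    qed simp
  next
    fix p assume "p \<in> A \<union> f ` A"
    then show "p \<in> P" using A cl by auto
  qed
  have dis: "A \<inter> f ` A = {}" using sw A by auto
  have inj: "inj_on f A" by (rule inj_onI) (metis A inv subsetD)
  have finA: "finite A" using A fin finite_subset by blast
  have "sum g P = sum g A + sum g (f ` A)"
    unfolding PA by (rule sum.union_disjoint) (use finA dis in auto)
  also have "sum g (f ` A) = sum (g \<circ> f) A" by (rule sum.reindex[OF inj])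
  finally show ?thesis by (simp add: sum.distrib)
qed

context hecke begin

lemma qpow_comm: "q ^ l * y = y * q ^ l"
  by (induction l) (simp_all add: mult.assoc qcomm, metis mult.assoc qcomm)

lemma qipow_comm: "(- qi) ^ l * y = y * (- qi) ^ l"
proof (induction l)
  case (Suc l)
  have "(- qi) ^ Suc l * y = - qi * ((- qi) ^ l * y)" by (simp add: mult.assoc)
  also have "\<dots> = - (qi * y) * (- qi) ^ l" using Suc by (simp add: mult.assoc)
  also have "\<dots> = y * (- qi) ^ Suc l" using qicomm[of y] by (simp add: mult.assoc)
  finally show ?case .
qed simp

lemma T_comm_shift:
  assumes p: "p permutes {1..k}" and mk: "m + k \<le> n" and j: "1 \<le> j" "j < n"
    and out: "j + 1 \<le> m \<or> m + k < j"
  shows "\<sigma> j * T (shift_perm m k p) = T (shift_perm m k p) * \<sigma> j"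
proof -
  let ?x = "shift_perm m k p"
  have x: "?x permutes {1..n}" using shift_permutes[OF p mk] .
  have xj: "?x j = j" "?x (j+1) = j+1" using out by (auto simp: shift_perm_def)
  have ixj: "inv ?x j = j" "inv ?x (j+1) = j+1" using xj permutes_inv_eq[OF x] by auto
  have e1: "T (?x \<circ> sswap j) = \<sigma> j * T ?x" using T_left[OF x j] xj by simp
  have e2: "T (sswap j \<circ> ?x) = T ?x * \<sigma> j" using T_right[OF x j] ixj by simp
  have c: "?x \<circ> sswap j = sswap j \<circ> ?x"
  proof (rule ext)
    fix y
    show "(?x \<circ> sswap j) y = (sswap j \<circ> ?x) y"
    proof (cases "y = j \<or> y = j + 1")
      case True then show ?thesis using xj by (auto simp: sswap_def)
    next
      case False
      have "?x y \<noteq> j" using ixj(1) permutes_inv_eq[OF x] False by metis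
      moreover have "?x y \<noteq> j + 1" using ixj(2) permutes_inv_eq[OF x] False by metis
      ultimately show ?thesis using False by (simp add: sswap_def)
    qed
  qed
  show ?thesis using e1 e2 c by simp
qed

lemma a_block_comm:
  assumes mk: "m + k \<le> n" and j: "1 \<le> j" "j < n" and out: "j + 1 \<le> m \<or> m + k < j"
  shows "\<sigma> j * a_block \<sigma> q n m k = a_block \<sigma> q n m k * \<sigma> j"
  unfolding a_block_def sum_distrib_left sum_distrib_right
proof (rule sum.cong[OF refl])
  fix p assume "p \<in> {p. p permutes {1..k}}"
  then have p: "p permutes {1..k}" by simp
  show "\<sigma> j * (q ^ inv_len k p * T (shift_perm m k p)) = q ^ inv_len k p * T (shift_perm m k p) * \<sigma> j"
    using T_comm_shift[OF p mk j out] qpow_comm by (metis mult.assoc)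
qed

lemma b_block_comm:
  assumes mk: "m + k \<le> n" and j: "1 \<le> j" "j < n" and out: "j + 1 \<le> m \<or> m + k < j"
  shows "\<sigma> j * b_block \<sigma> qi n m k = b_block \<sigma> qi n m k * \<sigma> j"
  unfolding b_block_def sum_distrib_left sum_distrib_right
proof (rule sum.cong[OF refl])
  fix p assume "p \<in> {p. p permutes {1..k}}"
  then have p: "p permutes {1..k}" by simp
  show "\<sigma> j * ((- qi) ^ inv_len k p * T (shift_perm m k p)) = (- qi) ^ inv_len k p * T (shift_perm m k p) * \<sigma> j"
    using T_comm_shift[OF p mk j out] qipow_comm by (metis mult.assoc)
qed

end


lemma blocks_comm:
  assumes "\<forall>m k. m0 \<le> m \<longrightarrow> m + k \<le> n \<longrightarrow> g * f m k = f m k * g"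
  shows "m0 + sum_list ks \<le> n \<Longrightarrow> g * blocks f m0 ks = blocks f m0 ks * (g::'a::ring_1)"
  using assms
proof (induction ks arbitrary: m0)
  case Nil then show ?case by simp
next
  case (Cons k ks)
  have h1: "g * f m0 k = f m0 k * g" using Cons.prems by auto
  have h2: "g * blocks f (m0 + k) ks = blocks f (m0 + k) ks * g"
    using Cons.prems by (intro Cons.IH) auto
  have "g * blocks f m0 (k # ks) = (g * f m0 k) * blocks f (m0 + k) ks" by (simp add: mult.assoc)
  also have "\<dots> = f m0 k * (g * blocks f (m0 + k) ks)" by (simp add: h1 mult.assoc)
  also have "\<dots> = blocks f m0 (k # ks) * g" by (simp add: h2 mult.assoc)
  finally show ?case .
qed

lemma blocks_lfactor:
  assumes fac: "\<forall>m k. m + k \<le> n \<and> m + 1 \<le> j \<and> j < m + k \<longrightarrow> (\<exists>X. f m k = L * X)"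
    and comm: "\<forall>m k. m + k \<le> n \<and> m + k < j \<longrightarrow> L * f m k = f m k * (L::'a::ring_1)"
  shows "c < length ks \<Longrightarrow> m0 + sum_list ks \<le> n \<Longrightarrow> m0 + sum_list (take c ks) + 1 \<le> j
    \<Longrightarrow> j < m0 + sum_list (take c ks) + ks ! c \<Longrightarrow> \<exists>X. blocks f m0 ks = L * X"
proof (induction ks arbitrary: m0 c)
  case Nil then show ?case by simp
next
  case (Cons k ks)
  show ?case
  proof (cases c)
    case 0
    then obtain X where "f m0 k = L * X" using fac Cons.prems by fastforce
    then show ?thesis by (auto simp: mult.assoc)
  next
    case (Suc c')
    have "\<exists>X. blocks f (m0 + k) ks = L * X"
      using Cons.prems Suc by (intro Cons.IH[of c']) (auto simp: add.assoc)
    then obtain X where X: "blocks f (m0 + k) ks = L * X" by blast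
    have "L * f m0 k = f m0 k * L" using comm Cons.prems Suc by auto
    then have "blocks f m0 (k # ks) = L * (f m0 k * X)" using X by (simp add: mult.assoc[symmetric])
    then show ?thesis by blast
  qed
qed

lemma blocks_rfactor:
  assumes fac: "\<forall>m k. m + k \<le> n \<and> m + 1 \<le> j \<and> j < m + k \<longrightarrow> (\<exists>X. f m k = X * R)"
    and comm: "\<forall>m k. m + k \<le> n \<and> j + 1 \<le> m \<longrightarrow> R * f m k = f m k * (R::'a::ring_1)"
  shows "c < length ks \<Longrightarrow> m0 + sum_list ks \<le> n \<Longrightarrow> m0 + sum_list (take c ks) + 1 \<le> j
    \<Longrightarrow> j < m0 + sum_list (take c ks) + ks ! c \<Longrightarrow> \<exists>X. blocks f m0 ks = X * R"
proof (induction ks arbitrary: m0 c)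
  case Nil then show ?case by simp
next
  case (Cons k ks)
  show ?case
  proof (cases c)
    case 0
    then obtain X where X: "f m0 k = X * R" using fac Cons.prems by fastforce
    have cm: "\<forall>m ka. m0 + k \<le> m \<longrightarrow> m + ka \<le> n \<longrightarrow> R * f m ka = f m ka * R"
      using comm Cons.prems 0 by auto
    have "R * blocks f (m0 + k) ks = blocks f (m0 + k) ks * R"
      using blocks_comm[of "m0+k" n R f ks, OF cm] Cons.prems by simp
    then have "blocks f m0 (k # ks) = X * blocks f (m0 + k) ks * R" using X by (simp add: mult.assoc)
    then show ?thesis by blast
  next
    case (Suc c')
    have "\<exists>X. blocks f (m0 + k) ks = X * R"
      using Cons.prems Suc by (intro Cons.IH[of c']) (auto simp: add.assoc)
    then obtain X where X: "blocks f (m0 + k) ks = X * R" by blast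
    then have "blocks f m0 (k # ks) = (f m0 k * X) * R" by (simp add: mult.assoc)
    then show ?thesis by blast
  qed
qed


definition inblk :: "nat list \<Rightarrow> nat \<Rightarrow> bool" where
  "inblk ks j \<longleftrightarrow> (\<exists>c < length ks. sum_list (take c ks) + 1 \<le> j \<and> j < sum_list (take c ks) + ks ! c)"

lemma take_nth_le: "c < length ks \<Longrightarrow> sum_list (take c ks) + ks ! c \<le> sum_list (ks::nat list)"
proof -
  assume c: "c < length ks"
  have "sum_list (take c ks) + ks ! c = sum_list (take (Suc c) ks)"
    using take_Suc_conv_app_nth[OF c] by simp
  also have "\<dots> \<le> sum_list (take (Suc c) ks) + sum_list (drop (Suc c) ks)" by simp
  also have "\<dots> = sum_list ks" by (simp add: sum_list_append[symmetric])
  finally show ?thesis .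
qed

context hecke begin

lemma a_block_factor:
  assumes b: "1 \<le> b" "b < k" and mk: "m + k \<le> n"
  shows "\<exists>X. a_block \<sigma> q n m k = (1 + q * \<sigma> (m + b)) * X"
proof -
  let ?P = "{p. p permutes {1..k}}"
  let ?f = "\<lambda>p. q ^ inv_len k p * T (shift_perm m k p)"
  let ?A = "{p \<in> ?P. p b < p (b+1)}"
  have j: "1 \<le> m + b" "m + b < n" using b mk by auto
  have "a_block \<sigma> q n m k = (\<Sum>p\<in>?A. ?f p + ?f (p \<circ> sswap b))"
    unfolding a_block_def
  proof (rule sum_split_invol)
    show "finite ?P" by (rule finite_permutations) simp
    show "\<And>p. p \<in> ?P \<Longrightarrow> p \<circ> sswap b \<in> ?P"
    proof -
      fix p assume "p \<in> ?P"
      then have "p permutes {1..k}" by simp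
      from permutes_sswap_comp[OF this b] show "p \<circ> sswap b \<in> ?P" by simp
    qed
    show "\<And>p. p \<in> ?P \<Longrightarrow> p \<circ> sswap b \<circ> sswap b = p" by (simp add: comp_assoc)
    show "?A \<subseteq> ?P" by auto
    show "\<And>p. p \<in> ?P \<Longrightarrow> p \<in> ?A \<longleftrightarrow> p \<circ> sswap b \<notin> ?A"
    proof -
      fix p assume p: "p \<in> ?P"
      have "p b \<noteq> p (b+1)" using perm_ne p by simp
      moreover have "p \<circ> sswap b permutes {1..k}" using permutes_sswap_comp[OF _ b] p by simp
      ultimately show "p \<in> ?A \<longleftrightarrow> p \<circ> sswap b \<notin> ?A" using p by (auto simp: sswap_def)
    qed
  qed
  also have "\<dots> = (\<Sum>p\<in>?A. (1 + q * \<sigma> (m + b)) * (q ^ inv_len k p * T (shift_perm m k p)))"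
  proof (rule sum.cong[OF refl])
    fix p assume pA: "p \<in> ?A"
    then have p: "p permutes {1..k}" and lt: "p b < p (b+1)" by auto
    have x: "shift_perm m k p permutes {1..n}" using shift_permutes[OF p mk] .
    have l: "inv_len k (p \<circ> sswap b) = Suc (inv_len k p)" using inv_len_comp_up[OF b lt] .
    have s: "shift_perm m k (p \<circ> sswap b) = shift_perm m k p \<circ> sswap (m + b)"
      using shift_comp[OF p sswap_permutes[OF b]] shift_sswap[OF b] by simp
    have lt2: "shift_perm m k p (m + b) < shift_perm m k p (m + b + 1)"
      using lt b by (simp add: shift_perm_def)
    have t: "T (shift_perm m k (p \<circ> sswap b)) = \<sigma> (m + b) * T (shift_perm m k p)"
      unfolding s using T_left[OF x j lt2] .
    show "?f p + ?f (p \<circ> sswap b) = (1 + q * \<sigma> (m + b)) * (q ^ inv_len k p * T (shift_perm m k p))"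
      unfolding l t using qpow_comm[of _ "\<sigma> (m+b)"]
      by (simp add: distrib_right mult.assoc) (metis mult.assoc qpow_comm)
  qed
  also have "\<dots> = (1 + q * \<sigma> (m + b)) * (\<Sum>p\<in>?A. q ^ inv_len k p * T (shift_perm m k p))"
    by (simp add: sum_distrib_left)
  finally show ?thesis by blast
qed


lemma b_block_factor:
  assumes b: "1 \<le> b" "b < k" and mk: "m + k \<le> n"
  shows "\<exists>X. b_block \<sigma> qi n m k = X * (1 - qi * \<sigma> (m + b))"
proof -
  let ?P = "{p. p permutes {1..k}}"
  let ?f = "\<lambda>p. (- qi) ^ inv_len k p * T (shift_perm m k p)"
  let ?A = "{p \<in> ?P. inv p b < inv p (b+1)}"
  have j: "1 \<le> m + b" "m + b < n" using b mk by auto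
  have invc: "\<And>p. p permutes {1..k} \<Longrightarrow> inv (sswap b \<circ> p) = inv p \<circ> sswap b"
    using o_inv_distrib[OF bij_sswap] inv_sswap permutes_bij by metis
  have "b_block \<sigma> qi n m k = (\<Sum>p\<in>?A. ?f p + ?f (sswap b \<circ> p))"
    unfolding b_block_def
  proof (rule sum_split_invol)
    show "finite ?P" by (rule finite_permutations) simp
    show "\<And>p. p \<in> ?P \<Longrightarrow> sswap b \<circ> p \<in> ?P"
    proof -
      fix p assume "p \<in> ?P"
      then have "p permutes {1..k}" by simp
      from permutes_comp_sswap[OF this b] show "sswap b \<circ> p \<in> ?P" by simp
    qed
    show "\<And>p. p \<in> ?P \<Longrightarrow> sswap b \<circ> (sswap b \<circ> p) = p" by (simp add: comp_assoc[symmetric])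
    show "?A \<subseteq> ?P" by auto
    show "\<And>p. p \<in> ?P \<Longrightarrow> p \<in> ?A \<longleftrightarrow> sswap b \<circ> p \<notin> ?A"
    proof -
      fix p assume p: "p \<in> ?P"
      have pp: "p permutes {1..k}" using p by simp
      have "inv p b \<noteq> inv p (b+1)" using perm_ne[OF permutes_inv[OF pp]] .
      moreover have "sswap b \<circ> p permutes {1..k}" using permutes_comp_sswap[OF _ b] p by simp
      moreover have "inv (sswap b \<circ> p) = inv p \<circ> sswap b" using invc p by simp
      ultimately show "p \<in> ?A \<longleftrightarrow> sswap b \<circ> p \<notin> ?A" using p by (auto simp: sswap_def)
    qed
  qed
  also have "\<dots> = (\<Sum>p\<in>?A. ((- qi) ^ inv_len k p * T (shift_perm m k p)) * (1 - qi * \<sigma> (m + b)))"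
  proof (rule sum.cong[OF refl])
    fix p assume pA: "p \<in> ?A"
    then have p: "p permutes {1..k}" and lt: "inv p b < inv p (b+1)" by auto
    have x: "shift_perm m k p permutes {1..n}" using shift_permutes[OF p mk] .
    have l: "inv_len k (sswap b \<circ> p) = Suc (inv_len k p)" using inv_len_lcomp_up[OF p b lt] .
    have s: "shift_perm m k (sswap b \<circ> p) = sswap (m + b) \<circ> shift_perm m k p"
      using shift_comp[OF sswap_permutes[OF b] p] shift_sswap[OF b] by simp
    have lt2: "inv (shift_perm m k p) (m + b) < inv (shift_perm m k p) (m + b + 1)"
      using lt b unfolding shift_inv[OF p] by (simp add: shift_perm_def)
    have t: "T (shift_perm m k (sswap b \<circ> p)) = T (shift_perm m k p) * \<sigma> (m + b)"
      unfolding s using T_right[OF x j lt2] .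
    have "?f (sswap b \<circ> p) = (- qi) ^ inv_len k p * (- qi) * (T (shift_perm m k p) * \<sigma> (m + b))"
      unfolding l t by (simp only: power_Suc2)
    also have "\<dots> = ((- qi) ^ inv_len k p * T (shift_perm m k p)) * (- qi * \<sigma> (m + b))"
    proof -
      have "- qi * (T (shift_perm m k p) * \<sigma> (m + b)) = T (shift_perm m k p) * (- qi * \<sigma> (m + b))"
        using qicomm[of "T (shift_perm m k p)"] by (simp add: mult.assoc[symmetric])
      then show ?thesis by (simp add: mult.assoc)
    qed
    finally show "?f p + ?f (sswap b \<circ> p) = ((- qi) ^ inv_len k p * T (shift_perm m k p)) * (1 - qi * \<sigma> (m + b))"
      by (simp add: algebra_simps)
  qed
  also have "\<dots> = (\<Sum>p\<in>?A. (- qi) ^ inv_len k p * T (shift_perm m k p)) * (1 - qi * \<sigma> (m + b))"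
    by (simp add: sum_distrib_right)
  finally show ?thesis by blast
qed

lemma qiqx: "qi * (q * x) = x" using qiq by (simp add: mult.assoc[symmetric])
lemma qqix: "q * (qi * x) = x" using qqi by (simp add: mult.assoc[symmetric])

lemma E_factor:
  assumes sl: "sum_list lam \<le> n" and ib: "inblk lam j"
  shows "\<exists>X. E_part \<sigma> q n lam = (1 + q * \<sigma> j) * X"
proof -
  obtain c where c: "c < length lam" "sum_list (take c lam) + 1 \<le> j" "j < sum_list (take c lam) + lam ! c"
    using ib unfolding inblk_def by blast
  have jn: "1 \<le> j" "j < n" using c take_nth_le[OF c(1)] sl by auto
  have fac: "\<forall>m k. m + k \<le> n \<and> m + 1 \<le> j \<and> j < m + k \<longrightarrow> (\<exists>X. a_block \<sigma> q n m k = (1 + q * \<sigma> j) * X)"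
  proof (intro allI impI)
    fix m k assume h: "m + k \<le> n \<and> m + 1 \<le> j \<and> j < m + k"
    then have "\<exists>X. a_block \<sigma> q n m k = (1 + q * \<sigma> (m + (j - m))) * X"
      by (intro a_block_factor) auto
    then show "\<exists>X. a_block \<sigma> q n m k = (1 + q * \<sigma> j) * X" using h by simp
  qed
  have comm: "\<forall>m k. m + k \<le> n \<and> m + k < j \<longrightarrow> (1 + q * \<sigma> j) * a_block \<sigma> q n m k = a_block \<sigma> q n m k * (1 + q * \<sigma> j)"
  proof (intro allI impI)
    fix m k assume h: "m + k \<le> n \<and> m + k < j"
    then have "\<sigma> j * a_block \<sigma> q n m k = a_block \<sigma> q n m k * \<sigma> j" using jn by (intro a_block_comm) auto
    then show "(1 + q * \<sigma> j) * a_block \<sigma> q n m k = a_block \<sigma> q n m k * (1 + q * \<sigma> j)"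
      by (simp add: algebra_simps mult.assoc qcomm[of "a_block \<sigma> q n m k"]) (metis mult.assoc qcomm)
  qed
  show ?thesis unfolding E_part_def
    using blocks_lfactor[OF fac comm c(1)] sl c by simp
qed

lemma F_factor:
  assumes sl: "sum_list lam \<le> n" and ib: "inblk lam j"
  shows "\<exists>X. F_part \<sigma> qi n lam = X * (1 - qi * \<sigma> j)"
proof -
  obtain c where c: "c < length lam" "sum_list (take c lam) + 1 \<le> j" "j < sum_list (take c lam) + lam ! c"
    using ib unfolding inblk_def by blast
  have jn: "1 \<le> j" "j < n" using c take_nth_le[OF c(1)] sl by auto
  have fac: "\<forall>m k. m + k \<le> n \<and> m + 1 \<le> j \<and> j < m + k \<longrightarrow> (\<exists>X. b_block \<sigma> qi n m k = X * (1 - qi * \<sigma> j))"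
  proof (intro allI impI)
    fix m k assume h: "m + k \<le> n \<and> m + 1 \<le> j \<and> j < m + k"
    then have "\<exists>X. b_block \<sigma> qi n m k = X * (1 - qi * \<sigma> (m + (j - m)))"
      by (intro b_block_factor) auto
    then show "\<exists>X. b_block \<sigma> qi n m k = X * (1 - qi * \<sigma> j)" using h by simp
  qed
  have comm: "\<forall>m k. m + k \<le> n \<and> j + 1 \<le> m \<longrightarrow> (1 - qi * \<sigma> j) * b_block \<sigma> qi n m k = b_block \<sigma> qi n m k * (1 - qi * \<sigma> j)"
  proof (intro allI impI)
    fix m k assume h: "m + k \<le> n \<and> j + 1 \<le> m"
    then have "\<sigma> j * b_block \<sigma> qi n m k = b_block \<sigma> qi n m k * \<sigma> j" using jn by (intro b_block_comm) auto
    then show "(1 - qi * \<sigma> j) * b_block \<sigma> qi n m k = b_block \<sigma> qi n m k * (1 - qi * \<sigma> j)"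
      by (simp add: algebra_simps mult.assoc qicomm[of "b_block \<sigma> qi n m k"]) (metis mult.assoc qicomm)
  qed
  show ?thesis unfolding F_part_def
    using blocks_rfactor[OF fac comm c(1)] sl c by simp
qed

lemma E_absorb:
  assumes "sum_list lam \<le> n" "inblk lam j"
  shows "\<sigma> j * E_part \<sigma> q n lam = q * E_part \<sigma> q n lam"
proof -
  obtain X where X: "E_part \<sigma> q n lam = (1 + q * \<sigma> j) * X" using E_factor[OF assms] by blast
  have jn: "1 \<le> j" "j < n" using assms take_nth_le unfolding inblk_def by fastforce+
  have "\<sigma> j * (1 + q * \<sigma> j) = q * (1 + q * \<sigma> j)"
  proof -
    have "\<sigma> j * (q * \<sigma> j) = q * (\<sigma> j * \<sigma> j)" by (metis mult.assoc qcomm)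
    then have "\<sigma> j * (1 + q * \<sigma> j) = \<sigma> j + q * (\<sigma> j * \<sigma> j)"
      by (simp add: distrib_left)
    also have "\<dots> = \<sigma> j + q * ((q - qi) * \<sigma> j + 1)" using sq[OF jn] by simp
    also have "\<dots> = q * (1 + q * \<sigma> j)"
      by (simp add: algebra_simps qqix)
    finally show ?thesis .
  qed
  then show ?thesis unfolding X by (simp add: mult.assoc[symmetric])
qed

lemma F_absorb:
  assumes "sum_list lam \<le> n" "inblk lam j"
  shows "F_part \<sigma> qi n lam * \<sigma> j = - qi * F_part \<sigma> qi n lam"
proof -
  obtain X where X: "F_part \<sigma> qi n lam = X * (1 - qi * \<sigma> j)" using F_factor[OF assms] by blast
  have jn: "1 \<le> j" "j < n" using assms take_nth_le unfolding inblk_def by fastforce+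
  have "(1 - qi * \<sigma> j) * \<sigma> j = - qi * (1 - qi * \<sigma> j)"
  proof -
    have "(1 - qi * \<sigma> j) * \<sigma> j = \<sigma> j - qi * (\<sigma> j * \<sigma> j)"
      by (simp add: left_diff_distrib mult.assoc)
    also have "\<dots> = \<sigma> j - qi * ((q - qi) * \<sigma> j + 1)" using sq[OF jn] by simp
    also have "\<dots> = - qi * (1 - qi * \<sigma> j)"
      by (simp add: algebra_simps qiqx)
    finally show ?thesis .
  qed
  then have "X * (1 - qi * \<sigma> j) * \<sigma> j = - qi * (X * (1 - qi * \<sigma> j))"
    by (simp add: mult.assoc qicomm[of X]) (metis mult.assoc qicomm)
  then show ?thesis unfolding X .
qed

end


lemma inblk_range: "sum_list ks \<le> n \<Longrightarrow> inblk ks j \<Longrightarrow> 1 \<le> j \<and> j < n"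
  unfolding inblk_def using take_nth_le by fastforce

lemma pow_rev: "perm_of_word (rev u) \<circ> perm_of_word u = id"
proof (induction u)
  case Nil then show ?case by simp
next
  case (Cons i u)
  have "perm_of_word (rev (i # u)) \<circ> perm_of_word (i # u)
      = sswap i \<circ> (perm_of_word (rev u) \<circ> perm_of_word u) \<circ> sswap i"
    by (simp add: pow_snoc pow_cons comp_assoc)
  then show ?case using Cons by simp
qed

lemma ring_id: "(1 - a) * (1 + b) = 1 + b - a - a * (b::'a::ring_1)"
  by (simp add: algebra_simps)

context hecke begin

lemma wprod_rev: "\<forall>i\<in>set u. 1 \<le> i \<and> i < n \<Longrightarrow> wprod \<sigma>' (rev u) * wprod \<sigma> u = 1"
proof (induction u)
  case Nil then show ?case by simp
next
  case (Cons i u)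
  have i: "\<sigma>' i * \<sigma> i = 1" using Cons.prems sinv by auto
  have "wprod \<sigma>' (rev (i # u)) * wprod \<sigma> (i # u) = wprod \<sigma>' (rev u) * (\<sigma>' i * \<sigma> i) * wprod \<sigma> u"
    by (simp add: mult.assoc)
  then show ?case using Cons i by simp
qed

lemma inverse_braid:
  assumes p: "p permutes {1..n}" and x1: "x * T p = 1" and x2: "T p * x = 1"
  shows "pbraid \<sigma>' n (inv p) = x"
proof -
  let ?u = "rword n p"
  have r: "reduced_word n p ?u" using rword_reduced[OF p] .
  have e1: "perm_of_word ?u \<circ> perm_of_word (rev ?u) = id" using pow_rev[of "rev ?u"] by simp
  have e2: "perm_of_word (rev ?u) \<circ> perm_of_word ?u = id" using pow_rev[of ?u] .
  have "inv (perm_of_word ?u) = perm_of_word (rev ?u)" by (rule inv_unique_comp[OF e1 e2])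
  then have ip: "inv p = perm_of_word (rev ?u)" using r by (simp add: reduced_word_def)
  have "reduced_word n (inv p) (rev ?u)"
    using r ip inv_len_inv[OF p] by (simp add: reduced_word_def)
  then have Y: "pbraid \<sigma>' n (inv p) = wprod \<sigma>' (rev ?u)" using T'_red by blast
  have Tp: "T p = wprod \<sigma> ?u" using T_red[OF r] .
  have "wprod \<sigma>' (rev ?u) * T p = 1" unfolding Tp by (rule wprod_rev) (use r in \<open>simp add: reduced_word_def\<close>)
  then have "wprod \<sigma>' (rev ?u) = wprod \<sigma>' (rev ?u) * (T p * x)" using x2 by simp
  also have "\<dots> = x" using \<open>wprod \<sigma>' (rev ?u) * T p = 1\<close> by (simp add: mult.assoc[symmetric])
  finally show ?thesis using Y by simp
qed

lemma core:
  assumes slam: "sum_list lam \<le> n" and smu: "sum_list mu \<le> n"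
    and K: "\<And>y. y permutes {1..n} \<Longrightarrow> (\<forall>a. inblk mu a \<longrightarrow> y a < y (a+1))
        \<Longrightarrow> (\<forall>b. inblk lam b \<longrightarrow> inv y b < inv y (b+1))
        \<Longrightarrow> (\<forall>a b. inblk mu a \<longrightarrow> inblk lam b \<longrightarrow> \<not> (y a = b \<and> y (a+1) = b+1)) \<Longrightarrow> y = w"
  shows "y permutes {1..n} \<Longrightarrow> inv_len n y < inv_len n w
    \<Longrightarrow> F_part \<sigma> qi n mu * T y * E_part \<sigma> q n lam = 0"
proof (induction "inv_len n y" arbitrary: y rule: less_induct)
  case less
  let ?F = "F_part \<sigma> qi n mu" and ?E = "E_part \<sigma> q n lam"
  have y: "y permutes {1..n}" using less by simp
  show ?case
  proof (cases "\<exists>a. inblk mu a \<and> y (a+1) < y a")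
    case True
    then obtain a where a: "inblk mu a" "y (a+1) < y a" by blast
    have ar: "1 \<le> a" "a < n" using inblk_range[OF smu a(1)] by auto
    let ?p = "y \<circ> sswap a"
    have pp: "?p permutes {1..n}" using permutes_sswap_comp[OF y ar] .
    have lt: "?p a < ?p (a+1)" using a by (simp add: sswap_def)
    have e0: "?p \<circ> sswap a = y" by (simp add: comp_assoc)
    have e: "T y = \<sigma> a * T ?p" using T_left[OF pp ar lt] unfolding e0 .
    have l: "inv_len n ?p < inv_len n y" using inv_len_comp_down[OF ar a(2)] by simp
    have z: "?F * T ?p * ?E = 0" using less.hyps[OF l pp] l less.prems by simp
    have "?F * T y * ?E = (?F * \<sigma> a) * T ?p * ?E" unfolding e by (simp add: mult.assoc)
    also have "\<dots> = - qi * (?F * T ?p * ?E)" using F_absorb[OF smu a(1)] by (simp add: mult.assoc)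
    finally show ?thesis using z by simp
  next
    case NA: False
    show ?thesis
    proof (cases "\<exists>b. inblk lam b \<and> inv y (b+1) < inv y b")
      case True
      then obtain b where b: "inblk lam b" "inv y (b+1) < inv y b" by blast
      have br: "1 \<le> b" "b < n" using inblk_range[OF slam b(1)] by auto
      let ?p = "sswap b \<circ> y"
      have pp: "?p permutes {1..n}" using permutes_comp_sswap[OF y br] .
      have ic: "inv ?p = inv y \<circ> sswap b"
        using o_inv_distrib[OF bij_sswap permutes_bij[OF y]] inv_sswap by simp
      have lt: "inv ?p b < inv ?p (b+1)" using b unfolding ic by (simp add: sswap_def)
      have e0: "sswap b \<circ> ?p = y" by (simp add: comp_assoc[symmetric])
      have e: "T y = T ?p * \<sigma> b" using T_right[OF pp br lt] unfolding e0 .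
      have l: "inv_len n ?p < inv_len n y" using inv_len_lcomp_down[OF y br b(2)] by simp
      have z: "?F * T ?p * ?E = 0" using less.hyps[OF l pp] l less.prems by simp
      have "?F * T y * ?E = ?F * T ?p * (\<sigma> b * ?E)" unfolding e by (simp add: mult.assoc)
      also have "\<dots> = q * (?F * T ?p * ?E)" using E_absorb[OF slam b(1)] by (simp add: mult.assoc qcomm)
      finally show ?thesis using z by simp
    next
      case NB: False
      have incA: "\<forall>a. inblk mu a \<longrightarrow> y a < y (a+1)"
        using NA perm_ne[OF y] by (metis linorder_neqE_nat)
      have incB: "\<forall>b. inblk lam b \<longrightarrow> inv y b < inv y (b+1)"
        using NB perm_ne[OF permutes_inv[OF y]] by (metis linorder_neqE_nat)
      have "y \<noteq> w" using less.prems by auto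
      then obtain a b where ab: "inblk mu a" "inblk lam b" "y a = b" "y (a+1) = b+1"
        using K[OF y incA incB] by blast
      have ar: "1 \<le> a" "a < n" using inblk_range[OF smu ab(1)] by auto
      have br: "1 \<le> b" "b < n" using inblk_range[OF slam ab(2)] by auto
      have iy: "inv y b = a" "inv y (b+1) = a+1" using ab permutes_inv_eq[OF y] by auto
      have t1: "T (y \<circ> sswap a) = \<sigma> a * T y" using T_left[OF y ar] ab by simp
      have t2: "T (sswap b \<circ> y) = T y * \<sigma> b" using T_right[OF y br] iy by simp
      have c: "y \<circ> sswap a = sswap b \<circ> y"
      proof (rule ext)
        fix z
        show "(y \<circ> sswap a) z = (sswap b \<circ> y) z"
        proof (cases "z = a \<or> z = a + 1")
          case True then show ?thesis using ab by (auto simp: sswap_def)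
        next
          case False
          have "y z \<noteq> b" using iy(1) permutes_inv_eq[OF y] False by metis
          moreover have "y z \<noteq> b + 1" using iy(2) permutes_inv_eq[OF y] False by metis
          ultimately show ?thesis using False by (simp add: sswap_def)
        qed
      qed
      have sw: "\<sigma> a * T y = T y * \<sigma> b" using t1 t2 c by simp
      obtain X where X: "?F = X * (1 - qi * \<sigma> a)" using F_factor[OF smu ab(1)] by blast
      obtain Y where Y: "?E = (1 + q * \<sigma> b) * Y" using E_factor[OF slam ab(2)] by blast
      have m1: "(1 - qi * \<sigma> a) * T y = T y * (1 - qi * \<sigma> b)"
      proof -
        have "T y * (qi * \<sigma> b) = qi * (T y * \<sigma> b)" by (metis mult.assoc qicomm)
        then show ?thesis using sw by (simp add: algebra_simps mult.assoc)
      qed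
      have m2: "(1 - qi * \<sigma> b) * (1 + q * \<sigma> b) = 0"
      proof -
        have a: "(qi * \<sigma> b) * (q * \<sigma> b) = \<sigma> b * \<sigma> b"
        proof -
          have "(qi * \<sigma> b) * (q * \<sigma> b) = qi * (q * (\<sigma> b * \<sigma> b))" by (metis mult.assoc qcomm)
          then show ?thesis by (simp add: qiqx)
        qed
        have "(1 - qi * \<sigma> b) * (1 + q * \<sigma> b) = 1 + q * \<sigma> b - qi * \<sigma> b - (qi * \<sigma> b) * (q * \<sigma> b)"
          by (rule ring_id)
        also have "\<dots> = 1 + q * \<sigma> b - qi * \<sigma> b - ((q - qi) * \<sigma> b + 1)" unfolding a sq[OF br] ..
        also have "\<dots> = 0" by (simp add: algebra_simps)
        finally show ?thesis .
      qed
      have "?F * T y * ?E = X * ((1 - qi * \<sigma> a) * T y) * (1 + q * \<sigma> b) * Y"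
        unfolding X Y by (simp add: mult.assoc)
      also have "\<dots> = X * T y * ((1 - qi * \<sigma> b) * (1 + q * \<sigma> b)) * Y"
        unfolding m1 by (simp add: mult.assoc)
      finally show ?thesis using m2 by simp
    qed
  qed
qed

lemma spn_zero:
  assumes "\<And>y. y permutes {1..n} \<Longrightarrow> inv_len n y \<le> m \<Longrightarrow> Fm * T y * Em = 0"
  shows "spn \<sigma> q qi n m v \<Longrightarrow> Fm * v * Em = 0"
proof (induction rule: spn.induct)
  case (base p) then show ?case using assms by blast
next
  case zero then show ?case by simp
next
  case (add a b) then show ?case by (simp add: distrib_left distrib_right)
next
  case (neg a) then show ?case by simp
next
  case (mq a)
  have "Fm * (q * a) * Em = q * (Fm * a * Em)" by (metis mult.assoc qcomm)
  then show ?case using mq by simp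
next
  case (mqi a)
  have "Fm * (qi * a) * Em = qi * (Fm * a * Em)" by (metis mult.assoc qicomm)
  then show ?case using mqi by simp
qed

lemma switch:
  assumes slam: "sum_list lam \<le> n" and smu: "sum_list mu \<le> n" and w: "w permutes {1..n}"
    and K: "\<And>y. y permutes {1..n} \<Longrightarrow> (\<forall>a. inblk mu a \<longrightarrow> y a < y (a+1))
        \<Longrightarrow> (\<forall>b. inblk lam b \<longrightarrow> inv y b < inv y (b+1))
        \<Longrightarrow> (\<forall>a b. inblk mu a \<longrightarrow> inblk lam b \<longrightarrow> \<not> (y a = b \<and> y (a+1) = b+1)) \<Longrightarrow> y = w"
  shows "F_part \<sigma> qi n mu * T w * E_part \<sigma> q n lam = F_part \<sigma> qi n mu * pbraid \<sigma>' n w * E_part \<sigma> q n lam"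
proof -
  let ?F = "F_part \<sigma> qi n mu" and ?E = "E_part \<sigma> q n lam"
  let ?u = "rword n w"
  have r: "reduced_word n w ?u" using rword_reduced[OF w] .
  have T1: "T w = wprod \<sigma> ?u" using T_red[OF r] .
  have T2: "pbraid \<sigma>' n w = wprod \<sigma>' ?u" using T'_red[OF r] .
  show ?thesis
  proof (cases "?u = []")
    case True then show ?thesis using T1 T2 by simp
  next
    case False
    have lett: "\<forall>i\<in>set ?u. 1 \<le> i \<and> i < n" and len: "length ?u = inv_len n w"
      using r by (auto simp: reduced_word_def)
    have d: "spn \<sigma> q qi n (length ?u - 1) (wprod \<sigma>' ?u - wprod \<sigma> ?u)" using diff_spn[OF lett False] .
    have z: "\<And>y. y permutes {1..n} \<Longrightarrow> inv_len n y \<le> length ?u - 1 \<Longrightarrow> ?F * T y * ?E = 0"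
    proof -
      fix y assume yp: "y permutes {1..n}" and le: "inv_len n y \<le> length ?u - 1"
      have "length ?u > 0" using False by simp
      then have "inv_len n y < inv_len n w" using le len by linarith
      then show "?F * T y * ?E = 0" using core[OF slam smu K yp] by blast
    qed
    have "?F * (wprod \<sigma>' ?u - wprod \<sigma> ?u) * ?E = 0" using spn_zero[OF z d] by blast
    then show ?thesis unfolding T1 T2 by (simp add: algebra_simps)
  qed
qed

end


lemma sum_take_le: "sum_list (take a ks) \<le> sum_list (ks::nat list)"
proof -
  have "sum_list ks = sum_list (take a ks) + sum_list (drop a ks)"
    by (simp add: sum_list_append[symmetric])
  then show ?thesis by simp
qed

lemma sum_take_mono: "a \<le> b \<Longrightarrow> sum_list (take a ks) \<le> sum_list (take b (ks::nat list))"
  using sum_take_le[of a "take b ks"] by (simp add: min_def)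

lemma sum_take_Suc: "c < length ks \<Longrightarrow> sum_list (take (Suc c) ks) = sum_list (take c ks) + ks ! c"
  by (simp add: take_Suc_conv_app_nth)

lemma cell_le: "is_cell ks r j \<Longrightarrow> cell_num ks r j \<le> sum_list (take r ks)"
proof -
  assume h: "is_cell ks r j"
  then have "r - 1 < length ks" "j \<le> ks ! (r - 1)" by (auto simp: is_cell_def)
  then have "cell_num ks r j \<le> sum_list (take (Suc (r - 1)) ks)"
    unfolding cell_num_def using sum_take_Suc[of "r - 1" ks] by simp
  then show ?thesis using h by (simp add: is_cell_def)
qed

lemma cell_range: "is_cell ks r j \<Longrightarrow> 1 \<le> cell_num ks r j \<and> cell_num ks r j \<le> sum_list ks"
  using cell_le[of ks r j] sum_take_le[of r ks] by (auto simp: is_cell_def cell_num_def)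

lemma cell_less_row:
  assumes "is_cell ks r j" "is_cell ks r' j'" "r < r'"
  shows "cell_num ks r j < cell_num ks r' j'"
proof -
  have "cell_num ks r j \<le> sum_list (take r ks)" using cell_le[OF assms(1)] .
  also have "\<dots> \<le> sum_list (take (r' - 1) ks)" using assms(3) by (intro sum_take_mono) auto
  also have "\<dots> < cell_num ks r' j'" using assms(2) by (simp add: cell_num_def is_cell_def)
  finally show ?thesis .
qed

lemma cell_less_iff:
  assumes "is_cell ks r j" "is_cell ks r' j'"
  shows "cell_num ks r j < cell_num ks r' j' \<longleftrightarrow> r < r' \<or> (r = r' \<and> j < j')"
proof -
  consider "r < r'" | "r = r'" | "r' < r" by linarith
  then show ?thesis
  proof cases
    case 1 then show ?thesis using cell_less_row[OF assms] by simp
  next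
    case 2 then show ?thesis by (simp add: cell_num_def)
  next
    case 3 then show ?thesis using cell_less_row[OF assms(2,1)] by simp
  qed
qed

lemma cell_inj:
  assumes "is_cell ks r j" "is_cell ks r' j'" "cell_num ks r j = cell_num ks r' j'"
  shows "r = r' \<and> j = j'"
  using cell_less_iff[OF assms(1,2)] cell_less_iff[OF assms(2,1)] assms(3) by auto

lemma cell_surj:
  "1 \<le> x \<Longrightarrow> x \<le> sum_list ks \<Longrightarrow> \<exists>r j. is_cell ks r j \<and> x = cell_num ks r j"
proof (induction ks arbitrary: x)
  case Nil then show ?case by simp
next
  case (Cons k ks)
  show ?case
  proof (cases "x \<le> k")
    case True
    then have "is_cell (k # ks) 1 x \<and> x = cell_num (k # ks) 1 x"
      using Cons.prems by (simp add: is_cell_def cell_num_def)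
    then show ?thesis by blast
  next
    case False
    have "\<exists>r j. is_cell ks r j \<and> x - k = cell_num ks r j"
      using Cons.prems False by (intro Cons.IH) auto
    then obtain r j where rj: "is_cell ks r j" "x - k = cell_num ks r j" by blast
    have r1: "1 \<le> r" using rj by (simp add: is_cell_def)
    have "is_cell (k # ks) (Suc r) j" using rj r1 by (auto simp: is_cell_def)
    moreover have "x = cell_num (k # ks) (Suc r) j"
      using rj r1 False by (cases r) (auto simp: cell_num_def)
    ultimately show ?thesis by blast
  qed
qed

lemma inblk_cell:
  "inblk ks a \<longleftrightarrow> (\<exists>r j. is_cell ks r j \<and> is_cell ks r (j+1) \<and> a = cell_num ks r j)"
proof
  assume "inblk ks a"
  then obtain c where c: "c < length ks" "sum_list (take c ks) + 1 \<le> a" "a < sum_list (take c ks) + ks ! c"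
    unfolding inblk_def by blast
  let ?j = "a - sum_list (take c ks)"
  have "is_cell ks (Suc c) ?j \<and> is_cell ks (Suc c) (?j+1) \<and> a = cell_num ks (Suc c) ?j"
    using c by (auto simp: is_cell_def cell_num_def)
  then show "\<exists>r j. is_cell ks r j \<and> is_cell ks r (j+1) \<and> a = cell_num ks r j" by blast
next
  assume "\<exists>r j. is_cell ks r j \<and> is_cell ks r (j+1) \<and> a = cell_num ks r j"
  then obtain r j where h: "is_cell ks r j" "is_cell ks r (j+1)" "a = cell_num ks r j" by blast
  then have "r - 1 < length ks \<and> sum_list (take (r - 1) ks) + 1 \<le> a \<and> a < sum_list (take (r - 1) ks) + ks ! (r - 1)"
    by (auto simp: is_cell_def cell_num_def)
  then show "inblk ks a" unfolding inblk_def by blast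
qed

lemma cell_num_Suc: "cell_num ks r (j+1) = cell_num ks r j + 1"
  by (simp add: cell_num_def)



lemma fold_max_ge_init: "(a::nat) \<le> fold max xs a"
  by (induction xs arbitrary: a) (auto intro: le_trans[OF max.cobounded2])

lemma fold_max_ge: "x \<in> set xs \<Longrightarrow> (x::nat) \<le> fold max xs a"
proof (induction xs arbitrary: a)
  case Nil then show ?case by simp
next
  case (Cons y ys)
  show ?case
  proof (cases "x = y")
    case True then show ?thesis using fold_max_ge_init[of "max y a" ys] by simp
  next
    case False then show ?thesis using Cons by simp
  qed
qed

lemma filter_sorted_len:
  "sorted_wrt (\<ge>) (xs::nat list) \<Longrightarrow> r < length (filter (\<lambda>x. c \<le> x) xs) \<longleftrightarrow> r < length xs \<and> c \<le> xs ! r"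
proof (induction xs arbitrary: r)
  case Nil then show ?case by simp
next
  case (Cons x xs)
  show ?case
  proof (cases "c \<le> x")
    case True
    then show ?thesis using Cons by (cases r) auto
  next
    case False
    have "\<forall>y\<in>set xs. \<not> c \<le> y"
    proof
      fix y assume "y \<in> set xs"
      then have "y \<le> x" using Cons.prems by simp
      then show "\<not> c \<le> y" using False by simp
    qed
    then have "filter (\<lambda>y. c \<le> y) xs = []" by (simp add: filter_empty_conv)
    moreover have "\<forall>i < length xs. \<not> c \<le> xs ! i" using Cons.prems False by (auto simp: set_conv_nth)
    ultimately show ?thesis using False by (cases r) auto
  qed
qed

lemma conj_len: "length (conj_part lam) = fold max lam 0"
  by (simp add: conj_part_def)

lemma conj_nth: "1 \<le> c \<Longrightarrow> c \<le> fold max lam 0 \<Longrightarrow> conj_part lam ! (c - 1) = length (filter (\<lambda>x. c \<le> x) lam)"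
proof -
  assume c: "1 \<le> c" "c \<le> fold max lam 0"
  have e: "[1..<Suc (fold max lam 0)] ! (c - 1) = c" using c by (subst nth_upt) auto
  have "conj_part lam ! (c - 1) = (\<lambda>j. length (filter (\<lambda>x. j \<le> x) lam)) ([1..<Suc (fold max lam 0)] ! (c - 1))"
    unfolding conj_part_def by (rule nth_map) (use c in simp)
  then show ?thesis by (simp only: e)
qed

lemma transpose_cell:
  assumes "is_partition n lam"
  shows "is_cell lam r c \<longleftrightarrow> is_cell (conj_part lam) c r"
proof -
  have s: "sorted_wrt (\<ge>) lam" using assms by (simp add: is_partition_def)
  show ?thesis
  proof
    assume h: "is_cell lam r c"
    then have r: "r - 1 < length lam" "1 \<le> r" "1 \<le> c" "c \<le> lam ! (r - 1)" by (auto simp: is_cell_def)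
    have cM: "c \<le> fold max lam 0" using r fold_max_ge[of "lam ! (r - 1)" lam 0] by (meson le_trans nth_mem)
    have "r - 1 < length (filter (\<lambda>x. c \<le> x) lam)" using filter_sorted_len[OF s] r by blast
    then show "is_cell (conj_part lam) c r"
      using r cM conj_nth[of c lam] by (auto simp: is_cell_def conj_len)
  next
    assume h: "is_cell (conj_part lam) c r"
    then have c: "1 \<le> c" "c \<le> fold max lam 0" "1 \<le> r" "r \<le> conj_part lam ! (c - 1)"
      by (auto simp: is_cell_def conj_len)
    then have "r - 1 < length (filter (\<lambda>x. c \<le> x) lam)" using conj_nth[of c lam] by simp
    then have "r - 1 < length lam \<and> c \<le> lam ! (r - 1)" using filter_sorted_len[OF s] by blast
    then show "is_cell lam r c" using c by (auto simp: is_cell_def)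
  qed
qed

definition cells :: "nat list \<Rightarrow> (nat \<times> nat) set" where
  "cells ks = {(r, j). is_cell ks r j}"

lemma cells_bij: "bij_betw (\<lambda>(r, j). cell_num ks r j) (cells ks) {1..sum_list ks}"
proof (rule bij_betw_imageI)
  show "inj_on (\<lambda>(r, j). cell_num ks r j) (cells ks)"
    by (rule inj_onI) (auto simp: cells_def dest: cell_inj)
  show "(\<lambda>(r, j). cell_num ks r j) ` cells ks = {1..sum_list ks}"
  proof (intro equalityI subsetI)
    fix x assume "x \<in> (\<lambda>(r, j). cell_num ks r j) ` cells ks"
    then show "x \<in> {1..sum_list ks}" using cell_range by (auto simp: cells_def)
  next
    fix x assume "x \<in> {1..sum_list ks}"
    then obtain r j where "is_cell ks r j" "x = cell_num ks r j" using cell_surj by fastforce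
    then show "x \<in> (\<lambda>(r, j). cell_num ks r j) ` cells ks" by (force simp: cells_def)
  qed
qed

lemma card_cells: "card (cells ks) = sum_list ks"
  using bij_betw_same_card[OF cells_bij[of ks]] by simp

lemma conj_sum:
  assumes "is_partition n lam"
  shows "sum_list (conj_part lam) = n"
proof -
  have "bij_betw (\<lambda>(r, c). (c, r)) (cells lam) (cells (conj_part lam))"
    by (rule bij_betw_imageI) (auto simp: cells_def transpose_cell[OF assms] inj_on_def)
  then have "card (cells lam) = card (cells (conj_part lam))" by (rule bij_betw_same_card)
  then show ?thesis using card_cells assms by (simp add: is_partition_def)
qed

lemma pi_cell:
  assumes "is_cell lam r c"
  shows "pi_part lam (cell_num lam r c) = cell_num (conj_part lam) c r"
proof -
  have ex: "\<exists>r' c'. is_cell lam r' c' \<and> cell_num lam r c = cell_num lam r' c'" using assms by blast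
  have "(THE j. \<exists>r' c'. is_cell lam r' c' \<and> cell_num lam r c = cell_num lam r' c' \<and> j = cell_num (conj_part lam) c' r')
      = cell_num (conj_part lam) c r"
  proof (rule the_equality)
    show "\<exists>r' c'. is_cell lam r' c' \<and> cell_num lam r c = cell_num lam r' c' \<and> cell_num (conj_part lam) c r = cell_num (conj_part lam) c' r'"
      using assms by blast
  next
    fix j assume "\<exists>r' c'. is_cell lam r' c' \<and> cell_num lam r c = cell_num lam r' c' \<and> j = cell_num (conj_part lam) c' r'"
    then obtain r' c' where h: "is_cell lam r' c'" "cell_num lam r c = cell_num lam r' c'" "j = cell_num (conj_part lam) c' r'" by blast
    then have "r = r' \<and> c = c'" using cell_inj[OF assms h(1)] by simp
    then show "j = cell_num (conj_part lam) c r" using h by simp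
  qed
  then show ?thesis unfolding pi_part_def using ex by simp
qed

lemma pi_permutes:
  assumes part: "is_partition n lam"
  shows "pi_part lam permutes {1..n}"
proof (rule bij_imp_permutes)
  let ?p = "pi_part lam" and ?mu = "conj_part lam"
  have sl: "sum_list lam = n" using part by (simp add: is_partition_def)
  have sm: "sum_list ?mu = n" using conj_sum[OF part] .
  have rep: "\<And>x. x \<in> {1..n} \<Longrightarrow> \<exists>r c. is_cell lam r c \<and> x = cell_num lam r c"
    using cell_surj sl by auto
  have into: "?p ` {1..n} \<subseteq> {1..n}"
  proof
    fix y assume "y \<in> ?p ` {1..n}"
    then obtain x where x: "x \<in> {1..n}" "y = ?p x" by auto
    obtain r c where rc: "is_cell lam r c" "x = cell_num lam r c" using rep[OF x(1)] by blast
    have "is_cell ?mu c r" using rc transpose_cell[OF part] by blast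
    then show "y \<in> {1..n}" using x rc pi_cell[OF rc(1)] cell_range[of ?mu c r] sm by auto
  qed
  have inj: "inj_on ?p {1..n}"
  proof (rule inj_onI)
    fix x x' assume x: "x \<in> {1..n}" and x': "x' \<in> {1..n}" and e: "?p x = ?p x'"
    obtain r c where rc: "is_cell lam r c" "x = cell_num lam r c" using rep[OF x] by blast
    obtain r' c' where rc': "is_cell lam r' c'" "x' = cell_num lam r' c'" using rep[OF x'] by blast
    have "cell_num ?mu c r = cell_num ?mu c' r'" using e rc rc' pi_cell by metis
    then have "c = c' \<and> r = r'"
      using cell_inj[of ?mu c r c' r'] rc(1) rc'(1) transpose_cell[OF part] by blast
    then show "x = x'" using rc rc' by simp
  qed
  show "bij_betw ?p {1..n} {1..n}"
    unfolding bij_betw_def using inj endo_inj_surj[OF _ into inj] by simp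
  show "\<And>x. x \<notin> {1..n} \<Longrightarrow> ?p x = x"
  proof -
    fix x assume x: "x \<notin> {1..n}"
    have "\<not> (\<exists>r c. is_cell lam r c \<and> x = cell_num lam r c)" using x cell_range sl by fastforce
    then show "?p x = x" by (auto simp: pi_part_def)
  qed
qed

lemma w_cell:
  assumes part: "is_partition n lam" and rc: "is_cell lam r c"
  shows "inv (pi_part lam) (cell_num (conj_part lam) c r) = cell_num lam r c"
  using pi_cell[OF rc] permutes_inv_eq[OF pi_permutes[OF part]] by blast



lemma K_lemma:
  assumes part: "is_partition n lam" and y: "y permutes {1..n}"
    and incA: "\<forall>a. inblk (conj_part lam) a \<longrightarrow> y a < y (a+1)"
    and incB: "\<forall>b. inblk lam b \<longrightarrow> inv y b < inv y (b+1)"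
    and noadj: "\<forall>a b. inblk (conj_part lam) a \<longrightarrow> inblk lam b \<longrightarrow> \<not> (y a = b \<and> y (a+1) = b+1)"
  shows "y = inv (pi_part lam)"
proof -
  define mu where "mu = conj_part lam"
  have tc: "\<And>r c. is_cell lam r c \<longleftrightarrow> is_cell mu c r" unfolding mu_def using transpose_cell[OF part] .
  have sl: "sum_list lam = n" using part by (simp add: is_partition_def)
  have sm: "sum_list mu = n" unfolding mu_def using conj_sum[OF part] .
  have repB: "\<And>x. 1 \<le> x \<Longrightarrow> x \<le> n \<Longrightarrow> \<exists>r j. is_cell lam r j \<and> x = cell_num lam r j"
    using cell_surj sl by blast
  have repT: "\<And>x. 1 \<le> x \<Longrightarrow> x \<le> n \<Longrightarrow> \<exists>c i. is_cell mu c i \<and> x = cell_num mu c i"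
    using cell_surj sm by blast
  have yin: "\<And>x. x \<in> {1..n} \<Longrightarrow> y x \<in> {1..n}" using permutes_in_image[OF y] by blast
  have iyin: "\<And>x. x \<in> {1..n} \<Longrightarrow> inv y x \<in> {1..n}" using permutes_in_image[OF permutes_inv[OF y]] by blast
  have yiy: "\<And>x. y (inv y x) = x" and iyy: "\<And>x. inv y (y x) = x" using permutes_inverses[OF y] by auto
  have yinj: "\<And>a b. y a = y b \<Longrightarrow> a = b" by (metis iyy)
  have Tin: "\<And>c i. is_cell mu c i \<Longrightarrow> cell_num mu c i \<in> {1..n}" using cell_range sm by fastforce
  have Bin: "\<And>r j. is_cell lam r j \<Longrightarrow> cell_num lam r j \<in> {1..n}" using cell_range sl by fastforce
  have incA': "\<And>c i. is_cell mu c i \<Longrightarrow> is_cell mu c (i+1) \<Longrightarrow> y (cell_num mu c i) < y (cell_num mu c i + 1)"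
    using incA inblk_cell unfolding mu_def by blast
  have incB': "\<And>r j. is_cell lam r j \<Longrightarrow> is_cell lam r (j+1) \<Longrightarrow> inv y (cell_num lam r j) < inv y (cell_num lam r j + 1)"
    using incB inblk_cell by blast
  have noadj': "\<And>c i r j. is_cell mu c i \<Longrightarrow> is_cell mu c (i+1) \<Longrightarrow> is_cell lam r j \<Longrightarrow> is_cell lam r (j+1)
      \<Longrightarrow> y (cell_num mu c i) = cell_num lam r j \<Longrightarrow> y (cell_num mu c i + 1) = cell_num lam r j + 1 \<Longrightarrow> False"
    using noadj inblk_cell unfolding mu_def by blast
  have cellB: "\<And>r j j'. is_cell lam r j' \<Longrightarrow> 1 \<le> j \<Longrightarrow> j \<le> j' \<Longrightarrow> is_cell lam r j"
    by (auto simp: is_cell_def)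
  have cellT: "\<And>c i i'. is_cell mu c i' \<Longrightarrow> 1 \<le> i \<Longrightarrow> i \<le> i' \<Longrightarrow> is_cell mu c i"
    by (auto simp: is_cell_def)
  have chainB: "\<And>r j d. is_cell lam r j \<Longrightarrow> is_cell lam r (j + Suc d) \<Longrightarrow>
      inv y (cell_num lam r j) < inv y (cell_num lam r (j + Suc d))"
  proof -
    fix r j d
    show "is_cell lam r j \<Longrightarrow> is_cell lam r (j + Suc d) \<Longrightarrow>
      inv y (cell_num lam r j) < inv y (cell_num lam r (j + Suc d))"
    proof (induction d)
      case 0 then show ?case using incB' cell_num_Suc by simp
    next
      case (Suc d)
      have c1: "is_cell lam r (j + Suc d)" using Suc.prems cellB[of r "j + Suc (Suc d)" "j + Suc d"]
        by (auto simp: is_cell_def)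
      have "inv y (cell_num lam r (j + Suc d)) < inv y (cell_num lam r (j + Suc d) + 1)"
        using incB'[OF c1] Suc.prems by simp
      then show ?case using Suc.IH[OF Suc.prems(1) c1] cell_num_Suc[of lam r "j + Suc d"] by simp
    qed
  qed
  have chainB': "\<And>r j j'. is_cell lam r j \<Longrightarrow> is_cell lam r j' \<Longrightarrow> j < j' \<Longrightarrow>
      inv y (cell_num lam r j) < inv y (cell_num lam r j')"
  proof -
    fix r j j' assume a: "is_cell lam r j" "is_cell lam r j'" "j < j'"
    then obtain d where "j' = j + Suc d" using less_iff_Suc_add by auto
    then show "inv y (cell_num lam r j) < inv y (cell_num lam r j')" using chainB a by simp
  qed
  have L1: "\<And>c i r1 j1 r2 j2. is_cell mu c i \<Longrightarrow> is_cell mu c (i+1) \<Longrightarrow> is_cell lam r1 j1 \<Longrightarrow> is_cell lam r2 j2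
     \<Longrightarrow> y (cell_num mu c i) = cell_num lam r1 j1 \<Longrightarrow> y (cell_num mu c (i+1)) = cell_num lam r2 j2 \<Longrightarrow> r1 < r2"
  proof -
    fix c i r1 j1 r2 j2
    assume a: "is_cell mu c i" "is_cell mu c (i+1)" "is_cell lam r1 j1" "is_cell lam r2 j2"
      and e1: "y (cell_num mu c i) = cell_num lam r1 j1" and e2: "y (cell_num mu c (i+1)) = cell_num lam r2 j2"
    have "cell_num lam r1 j1 < cell_num lam r2 j2" using incA'[OF a(1,2)] e1 e2 cell_num_Suc by simp
    then have o: "r1 < r2 \<or> (r1 = r2 \<and> j1 < j2)" using cell_less_iff[OF a(3,4)] by simp
    show "r1 < r2"
    proof (rule ccontr)
      assume "\<not> r1 < r2"
      then have rr: "r1 = r2" "j1 < j2" using o by auto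
      show False
      proof (cases "j1 + 1 < j2")
        case True
        have cm: "is_cell lam r1 (j1 + 1)" using cellB[of r1 j2 "j1+1"] a(4) rr True by simp
        have "inv y (cell_num lam r1 j1) < inv y (cell_num lam r1 (j1+1))" using chainB'[OF a(3) cm] by simp
        moreover have "inv y (cell_num lam r1 (j1+1)) < inv y (cell_num lam r1 j2)"
          using chainB'[OF cm] a(4) rr True by simp
        moreover have "inv y (cell_num lam r1 j1) = cell_num mu c i" using e1 iyy by metis
        moreover have "inv y (cell_num lam r1 j2) = cell_num mu c i + 1"
          using e2 iyy cell_num_Suc rr by metis
        ultimately show False by simp
      next
        case False
        then have j2: "j2 = j1 + 1" using rr by simp
        have "is_cell lam r1 (j1+1)" using a(4) rr j2 by simp
        then show False using noadj'[OF a(1,2) a(3)] e1 e2 j2 rr cell_num_Suc by metis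
      qed
    qed
  qed
  have main: "\<And>x. \<forall>c i. is_cell mu c i \<longrightarrow> x = cell_num mu c i \<longrightarrow> y x = cell_num lam i c"
  proof -
    fix x
    show "\<forall>c i. is_cell mu c i \<longrightarrow> x = cell_num mu c i \<longrightarrow> y x = cell_num lam i c"
    proof (induction x rule: less_induct)
      case (less x)
      show ?case
      proof (intro allI impI)
        fix c i assume ci: "is_cell mu c i" and xe: "x = cell_num mu c i"
        have H: "\<And>c' i'. is_cell mu c' i' \<Longrightarrow> c' < c \<or> (c' = c \<and> i' < i) \<Longrightarrow> y (cell_num mu c' i') = cell_num lam i' c'"
        proof -
          fix c' i' assume ci': "is_cell mu c' i'" and lt: "c' < c \<or> (c' = c \<and> i' < i)"
          have "cell_num mu c' i' < x" using cell_less_iff[OF ci' ci] lt xe by simp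
          then show "y (cell_num mu c' i') = cell_num lam i' c'" using less.IH ci' by blast
        qed
        have C2: "\<And>i' r' j'. is_cell mu c i' \<Longrightarrow> is_cell lam r' j' \<Longrightarrow> y (cell_num mu c i') = cell_num lam r' j' \<Longrightarrow> c \<le> j'"
        proof (rule ccontr)
          fix i' r' j' assume a: "is_cell mu c i'" "is_cell lam r' j'" "y (cell_num mu c i') = cell_num lam r' j'" "\<not> c \<le> j'"
          have cj: "is_cell mu j' r'" using a(2) tc by simp
          have "y (cell_num mu j' r') = cell_num lam r' j'" using H[OF cj] a(4) by simp
          then have "cell_num mu j' r' = cell_num mu c i'" using a(3) yinj by metis
          then have "j' = c" using cell_inj[OF cj a(1)] by simp
          then show False using a(4) by simp
        qed
        have xin: "x \<in> {1..n}" using Tin[OF ci] xe by simp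
        obtain r j where rj: "is_cell lam r j" "y x = cell_num lam r j" using repB yin[OF xin] by force
        have C1: "i \<le> r"
        proof (cases "i = 1")
          case True then show ?thesis using rj by (simp add: is_cell_def)
        next
          case False
          then have i1: "i = (i - 1) + 1" "1 \<le> i - 1" using ci by (auto simp: is_cell_def)
          have cp: "is_cell mu c (i - 1)" using cellT[OF ci] i1 by simp
          have "y (cell_num mu c (i - 1)) = cell_num lam (i - 1) c" using H[OF cp] i1 by simp
          moreover have "is_cell lam (i - 1) c" using cp tc by simp
          ultimately have "i - 1 < r" using L1[of c "i - 1"] cp ci i1 rj xe by metis
          then show ?thesis by simp
        qed
        have C3: "r = i"
        proof (rule ccontr)
          assume "r \<noteq> i"
          then have ri: "i < r" using C1 by simp
          have grow: "\<And>d. is_cell mu c (i + d) \<Longrightarrow> (\<forall>r' j'. is_cell lam r' j' \<longrightarrow> y (cell_num mu c (i + d)) = cell_num lam r' j' \<longrightarrow> i + d < r')"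
          proof -
            fix d show "is_cell mu c (i + d) \<Longrightarrow> (\<forall>r' j'. is_cell lam r' j' \<longrightarrow> y (cell_num mu c (i + d)) = cell_num lam r' j' \<longrightarrow> i + d < r')"
            proof (induction d)
              case 0
              show ?case
              proof (intro allI impI)
                fix r' j' assume "is_cell lam r' j'" "y (cell_num mu c (i + 0)) = cell_num lam r' j'"
                then have "cell_num lam r j = cell_num lam r' j'" using rj(2) xe by simp
                then have "r' = r" using cell_inj[OF rj(1) \<open>is_cell lam r' j'\<close>] by simp
                then show "i + 0 < r'" using ri by simp
              qed
            next
              case (Suc d)
              have cd: "is_cell mu c (i + d)" using cellT[OF Suc.prems, of "i + d"] ci by (simp add: is_cell_def)
              obtain r'' j'' where rj'': "is_cell lam r'' j''" "y (cell_num mu c (i + d)) = cell_num lam r'' j''"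
                using repB yin[OF Tin[OF cd]] by force
              have ih: "i + d < r''" using Suc.IH[OF cd] rj'' by blast
              show ?case
              proof (intro allI impI)
                fix r' j' assume a: "is_cell lam r' j'" "y (cell_num mu c (i + Suc d)) = cell_num lam r' j'"
                have "r'' < r'" using L1[OF cd _ rj''(1) a(1) rj''(2)] Suc.prems a(2) by simp
                then show "i + Suc d < r'" using ih by simp
              qed
            qed
          qed
          define M where "M = mu ! (c - 1)"
          have cM: "is_cell mu c M" using ci by (simp add: is_cell_def M_def)
          have iM: "i \<le> M" using ci by (simp add: is_cell_def M_def)
          obtain r' j' where rj': "is_cell lam r' j'" "y (cell_num mu c M) = cell_num lam r' j'"
            using repB yin[OF Tin[OF cM]] by force
          have "i + (M - i) < r'" using grow[of "M - i"] cM iM rj' by simp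
          moreover have "c \<le> j'" using C2[OF cM rj'] .
          then have "is_cell lam r' c" using rj'(1) ci by (auto simp: is_cell_def)
          then have "is_cell mu c r'" using tc by simp
          then have "r' \<le> M" by (simp add: is_cell_def M_def)
          ultimately show False using iM by simp
        qed
        have C4: "j = c"
        proof (rule ccontr)
          assume "j \<noteq> c"
          then have cj: "c < j" using C2[OF ci rj(1)] rj(2) xe by fastforce
          have cc: "is_cell lam i c" using ci tc by simp
          have "inv y (cell_num lam i c) < inv y (cell_num lam i j)" using chainB'[OF cc] rj(1) C3 cj by simp
          moreover have "inv y (cell_num lam i j) = x" using rj(2) C3 iyy by metis
          ultimately have lt: "inv y (cell_num lam i c) < x" by simp
          have "inv y (cell_num lam i c) \<in> {1..n}" using iyin[OF Bin[OF cc]] .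
          then obtain c0 i0 where ci0: "is_cell mu c0 i0" "inv y (cell_num lam i c) = cell_num mu c0 i0"
            using repT by force
          have "y (cell_num mu c0 i0) = cell_num lam i0 c0" using less.IH[OF lt[unfolded ci0(2)]] ci0(1) by blast
          moreover have "y (cell_num mu c0 i0) = cell_num lam i c" using ci0(2) yiy by metis
          ultimately have "i0 = i \<and> c0 = c" using cell_inj[of lam i0 c0 i c] ci0(1) tc cc by metis
          then show False using lt ci0(2) xe by simp
        qed
        show "y x = cell_num lam i c" using rj C3 C4 by simp
      qed
    qed
  qed
  show ?thesis
  proof (rule ext)
    fix z
    show "y z = inv (pi_part lam) z"
    proof (cases "z \<in> {1..n}")
      case True
      then obtain c i where ci: "is_cell mu c i" "z = cell_num mu c i" using repT by force
      have "y z = cell_num lam i c" using main ci by blast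
      moreover have "inv (pi_part lam) z = cell_num lam i c"
        using w_cell[OF part, of i c] ci tc unfolding mu_def by simp
      ultimately show ?thesis by simp
    next
      case False
      have "y z = z" using permutes_not_in[OF y False] .
      moreover have "inv (pi_part lam) z = z"
        using permutes_not_in[OF permutes_inv[OF pi_permutes[OF part]] False] .
      ultimately show ?thesis by simp
    qed
  qed
qed



theorem lemma3p5:
  fixes \<sigma> \<sigma>' :: "nat \<Rightarrow> 'a::ring_1" and q qi x :: 'a and n :: nat and lam :: "nat list"
  assumes "q * qi = 1" and "qi * q = 1" and "\<forall>y. q * y = y * q"
    and "\<forall>i. 1 \<le> i \<and> i < n \<longrightarrow> \<sigma> i * \<sigma>' i = 1 \<and> \<sigma>' i * \<sigma> i = 1"
    and "\<forall>i. 1 \<le> i \<and> i < n \<longrightarrow> (\<sigma> i - q) * (\<sigma> i + qi) = 0"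
    and "\<forall>i j. 1 \<le> i \<and> i + 1 < j \<and> j < n \<longrightarrow> \<sigma> i * \<sigma> j = \<sigma> j * \<sigma> i"
    and "\<forall>i. 1 \<le> i \<and> i + 1 < n \<longrightarrow>
           \<sigma> i * \<sigma> (i + 1) * \<sigma> i = \<sigma> (i + 1) * \<sigma> i * \<sigma> (i + 1)"
    and "is_partition n lam"
    and "x * pbraid \<sigma> n (pi_part lam) = 1" and "pbraid \<sigma> n (pi_part lam) * x = 1"
  shows "F_part \<sigma> qi n (conj_part lam) * pbraid \<sigma> n (inv (pi_part lam)) * E_part \<sigma> q n lam
           = F_part \<sigma> qi n (conj_part lam) * pbraid \<sigma>' n (inv (pi_part lam)) * E_part \<sigma> q n lam
       \<and> F_part \<sigma> qi n (conj_part lam) * pbraid \<sigma>' n (inv (pi_part lam)) * E_part \<sigma> q n lam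
           = F_part \<sigma> qi n (conj_part lam) * x * E_part \<sigma> q n lam"
proof -
  interpret hecke \<sigma> \<sigma>' q qi n
    using assms(1-7) by (unfold_locales) auto
  have part: "is_partition n lam" using assms(8) .
  have pp: "pi_part lam permutes {1..n}" using pi_permutes[OF part] .
  have wp: "inv (pi_part lam) permutes {1..n}" using permutes_inv[OF pp] .
  have slam: "sum_list lam \<le> n" using part by (simp add: is_partition_def)
  have smu: "sum_list (conj_part lam) \<le> n" using conj_sum[OF part] by simp
  have e1: "F_part \<sigma> qi n (conj_part lam) * pbraid \<sigma> n (inv (pi_part lam)) * E_part \<sigma> q n lam
           = F_part \<sigma> qi n (conj_part lam) * pbraid \<sigma>' n (inv (pi_part lam)) * E_part \<sigma> q n lam"
    by (rule switch[OF slam smu wp K_lemma[OF part]])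
  have e2: "pbraid \<sigma>' n (inv (pi_part lam)) = x" using inverse_braid[OF pp assms(9,10)] .
  show ?thesis using e1 e2 by simp
qed


end
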